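(* Let $X$ be a finite set with $d=|X|\ge2$ and let $U$ be a clopen subset of $X^\omega$. If $U=\bigsqcup_{i=1}^n v_iX^\omega$ with $v_i\in X^*$, then the residue of $n$ modulo $d-1$ does not depend on the decomposition; denote it $m(U)\in\mathbb{Z}/(d-1)\mathbb{Z}$. For non-empty proper clopen subsets $U_1,U_2\subset X^\omega$ the following are equivalent: (1) $U_1,U_2$ lie in one $\mathcal{V}_X$-orbit; (2) $U_1,U_2$ lie in one $\mathcal{V}_X'$-orbit; (3) $m(U_1)=m(U_2)$.
   Context: $X^*$ is the set of finite words over $X$, $X^\omega$ the space of right-infinite sequences with the product topology, $vX^\omega$ the set of sequences beginning with $v$. A complete antichain is a finite set $A\subset X^*$ of words, none a prefix of another, with $X^\omega=\bigsqcup_{v\in A}vX^\omega$. The Higman–Thompson group $\mathcal{V}_X$ is the group of homeomorphisms $g$ of $X^\omega$ for which there are complete antichains $A_1,A_2$ and a bijection $\alpha:A_1\to A_2$ with $g(vw)=\alpha(v)w$ for all $v\in A_1$, $w\in X^\omega$. $\mathcal{V}_X'$ is its commutator subgroup. *)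

theory Defs
  imports "HOL-Analysis.Analysis" "HOL-Algebra.Generated_Groups" "HOL-Number_Theory.Cong"
begin

definition cantor_top :: "'a set \<Rightarrow> (nat \<Rightarrow> 'a) topology" where
  "cantor_top X = product_topology (\<lambda>_::nat. discrete_topology X) UNIV"

definition clopen_in :: "'a set \<Rightarrow> (nat \<Rightarrow> 'a) set \<Rightarrow> bool" where
  "clopen_in X U \<longleftrightarrow> openin (cantor_top X) U \<and> closedin (cantor_top X) U"

definition conc :: "'a list \<Rightarrow> (nat \<Rightarrow> 'a) \<Rightarrow> (nat \<Rightarrow> 'a)" where
  "conc v w = (\<lambda>i. if i < length v then v ! i else w (i - length v))"

definition cyl :: "'a set \<Rightarrow> 'a list \<Rightarrow> (nat \<Rightarrow> 'a) set" where
  "cyl X v = {conc v w | w. w \<in> topspace (cantor_top X)}"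

definition complete_antichain :: "'a set \<Rightarrow> 'a list set \<Rightarrow> bool" where
  "complete_antichain X A \<longleftrightarrow>
     finite A \<and> A \<subseteq> lists X \<and>
     (\<forall>u\<in>A. \<forall>v\<in>A. u \<noteq> v \<longrightarrow> \<not> (\<exists>w. v = u @ w)) \<and>
     (\<Union>v\<in>A. cyl X v) = topspace (cantor_top X) \<and>
     disjoint_family_on (cyl X) A"

text \<open>Higman--Thompson group; elements are homeomorphisms of X^omega, extended by the
  identity outside X^omega so that composition and inversion are the group operations.\<close>
definition HT :: "'a set \<Rightarrow> ((nat \<Rightarrow> 'a) \<Rightarrow> (nat \<Rightarrow> 'a)) set" where
  "HT X = {g. homeomorphic_map (cantor_top X) (cantor_top X) g \<and>
              (\<forall>x. x \<notin> topspace (cantor_top X) \<longrightarrow> g x = x) \<and>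
              (\<exists>A1 A2 \<alpha>. complete_antichain X A1 \<and> complete_antichain X A2 \<and>
                  bij_betw \<alpha> A1 A2 \<and>
                  (\<forall>v\<in>A1. \<forall>w\<in>topspace (cantor_top X). g (conc v w) = conc (\<alpha> v) w))}"

definition HT_group :: "'a set \<Rightarrow> ((nat \<Rightarrow> 'a) \<Rightarrow> (nat \<Rightarrow> 'a)) monoid" where
  "HT_group X = \<lparr>carrier = HT X, mult = (\<circ>), one = id\<rparr>"

definition HT_comm :: "'a set \<Rightarrow> ((nat \<Rightarrow> 'a) \<Rightarrow> (nat \<Rightarrow> 'a)) set" where
  "HT_comm X = derived (HT_group X) (HT X)"

definition same_orbit :: "(('b \<Rightarrow> 'b) set) \<Rightarrow> 'b set \<Rightarrow> 'b set \<Rightarrow> bool" where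
  "same_orbit G U1 U2 \<longleftrightarrow> (\<exists>g\<in>G. g ` U1 = U2)"

definition decomp :: "'a set \<Rightarrow> (nat \<Rightarrow> 'a) set \<Rightarrow> 'a list list \<Rightarrow> bool" where
  "decomp X U vs \<longleftrightarrow> set vs \<subseteq> lists X \<and>
     (\<forall>i<length vs. \<forall>j<length vs. i \<noteq> j \<longrightarrow> cyl X (vs ! i) \<inter> cyl X (vs ! j) = {}) \<and>
     (\<Union>i<length vs. cyl X (vs ! i)) = U"

definition mres :: "'a set \<Rightarrow> (nat \<Rightarrow> 'a) set \<Rightarrow> nat" where
  "mres X U = (THE r. \<exists>vs. decomp X U vs \<and> r = length vs mod (card X - 1))"

end

theory Submission imports Defs begin


abbreviation Om :: "'a set \<Rightarrow> (nat \<Rightarrow> 'a) set" where "Om X \<equiv> topspace (cantor_top X)"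

lemma Om_eq: "Om X = {x. \<forall>i. x i \<in> X}"
  by (auto simp: cantor_top_def topspace_product_topology PiE_def extensional_def)

definition pre :: "nat \<Rightarrow> (nat \<Rightarrow> 'a) \<Rightarrow> 'a list" where "pre n x = map x [0..<n]"
definition sh :: "nat \<Rightarrow> (nat \<Rightarrow> 'a) \<Rightarrow> (nat \<Rightarrow> 'a)" where "sh n x = (\<lambda>i. x (i + n))"

lemma length_pre[simp]: "length (pre n x) = n" by (simp add: pre_def)
lemma nth_pre[simp]: "i < n \<Longrightarrow> pre n x ! i = x i" by (simp add: pre_def)
lemma conc_pre_sh[simp]: "conc (pre n x) (sh n x) = x"
  by (auto simp: conc_def sh_def fun_eq_iff)
lemma sh_conc[simp]: "sh (length v) (conc v w) = w"
  by (auto simp: conc_def sh_def fun_eq_iff)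
lemma pre_conc[simp]: "pre (length v) (conc v w) = v"
  by (auto simp: conc_def intro!: nth_equalityI)
lemma conc_append: "conc (u @ v) w = conc u (conc v w)"
  by (auto simp: conc_def fun_eq_iff nth_append)
lemma conc_Nil[simp]: "conc [] w = w" by (simp add: conc_def)
lemma conc_eq: "length v = length v' \<Longrightarrow> conc v w = conc v' w' \<longleftrightarrow> v = v' \<and> w = w'"
  by (metis pre_conc sh_conc)
lemma conc_Om: "conc v w \<in> Om X \<longleftrightarrow> set v \<subseteq> X \<and> w \<in> Om X"
proof
  assume a: "conc v w \<in> Om X"
  have "set v \<subseteq> X"
  proof
    fix z assume "z \<in> set v"
    then obtain i where i: "i < length v" "v ! i = z" by (auto simp: in_set_conv_nth)
    have "conc v w i \<in> X" using a by (simp add: Om_eq)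
    moreover have "conc v w i = z" using i by (simp add: conc_def)
    ultimately show "z \<in> X" by simp
  qed
  moreover have "w \<in> Om X" unfolding Om_eq
  proof (intro CollectI allI)
    fix i
    have "conc v w (i + length v) \<in> X" using a by (simp add: Om_eq)
    moreover have "conc v w (i + length v) = w i" by (simp add: conc_def)
    ultimately show "w i \<in> X" by simp
  qed
  ultimately show "set v \<subseteq> X \<and> w \<in> Om X" by simp
next
  assume "set v \<subseteq> X \<and> w \<in> Om X"
  then show "conc v w \<in> Om X" by (auto simp: Om_eq conc_def)
qed
lemma pre_Om: "x \<in> Om X \<Longrightarrow> set (pre n x) \<subseteq> X" by (auto simp: Om_eq pre_def)
lemma sh_Om: "x \<in> Om X \<Longrightarrow> sh n x \<in> Om X" by (auto simp: Om_eq sh_def)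
lemma pre_conc_le: "n \<le> length v \<Longrightarrow> pre n (conc v w) = take n v"
  by (auto simp: conc_def intro!: nth_equalityI)
lemma pre_conc_ge: "length v \<le> n \<Longrightarrow> pre n (conc v w) = v @ pre (n - length v) w"
  by (auto simp: conc_def nth_append intro!: nth_equalityI)
lemma pre_pre: "m \<le> n \<Longrightarrow> pre m x = take m (pre n x)"
  by (auto intro!: nth_equalityI)
lemma pre_sh: "pre n (sh m x) = drop m (pre (m + n) x)"
  by (auto simp: sh_def intro!: nth_equalityI) (simp add: add.commute)
lemma cyl_eq: assumes v: "set v \<subseteq> X" shows "cyl X v = {x \<in> Om X. pre (length v) x = v}"
proof (rule equalityI; rule subsetI)
  fix x assume "x \<in> cyl X v"
  then obtain w where "x = conc v w" "w \<in> Om X" by (auto simp: cyl_def)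
  then show "x \<in> {x \<in> Om X. pre (length v) x = v}" using v by (simp add: conc_Om)
next
  fix x assume x: "x \<in> {x \<in> Om X. pre (length v) x = v}"
  then have "x = conc v (sh (length v) x)" by (metis (mono_tags, lifting) conc_pre_sh mem_Collect_eq)
  moreover have "sh (length v) x \<in> Om X" using x by (simp add: sh_Om)
  ultimately show "x \<in> cyl X v" by (auto simp: cyl_def)
qed

definition W :: "'a set \<Rightarrow> nat \<Rightarrow> 'a list set" where
  "W X n = {w. set w \<subseteq> X \<and> length w = n}"
definition L :: "'a set \<Rightarrow> nat \<Rightarrow> 'a list set \<Rightarrow> (nat \<Rightarrow> 'a) set" where
  "L X n S = {x \<in> Om X. pre n x \<in> S}"

lemma finite_W: "finite X \<Longrightarrow> finite (W X n)"
  unfolding W_def by (rule finite_lists_length_eq)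
lemma card_W: "finite X \<Longrightarrow> card (W X n) = card X ^ n"
  unfolding W_def by (rule card_lists_length_eq)
lemma pre_W: "x \<in> Om X \<Longrightarrow> pre n x \<in> W X n" by (simp add: W_def pre_Om)



lemma open_imp:
  assumes o: "openin (cantor_top X) U" and "x \<in> U"
  shows "\<exists>n. \<forall>y\<in>Om X. pre n y = pre n x \<longrightarrow> y \<in> U"
proof -
  have "\<exists>V. finite {i \<in> UNIV. V i \<noteq> topspace (discrete_topology X)} \<and>
            (\<forall>i\<in>UNIV. openin (discrete_topology X) (V i)) \<and> x \<in> Pi\<^sub>E UNIV V \<and> Pi\<^sub>E UNIV V \<subseteq> U"
    using o \<open>x \<in> U\<close> unfolding cantor_top_def openin_product_topology_alt by blast
  then obtain V where V: "finite {i. V i \<noteq> X}" "x \<in> Pi\<^sub>E UNIV V" "Pi\<^sub>E UNIV V \<subseteq> U"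
    by auto
  obtain n where n: "{i. V i \<noteq> X} \<subseteq> {..<n}"
    using finite_nat_bounded[OF V(1)] by blast
  show ?thesis
  proof (intro exI ballI impI)
    fix y assume y: "y \<in> Om X" "pre n y = pre n x"
    have "y i \<in> V i" for i
    proof (cases "i < n")
      case True
      then have "pre n y ! i = pre n x ! i" using y(2) by simp
      then have "y i = x i" using True by simp
      then show ?thesis using V(2) by (simp add: PiE_iff)
    next
      case False
      then have "V i = X" using n by force
      then show ?thesis using y(1) by (simp add: Om_eq)
    qed
    then have "y \<in> Pi\<^sub>E UNIV V" by (simp add: PiE_iff)
    then show "y \<in> U" using V(3) by blast
  qed
qed

lemma open_intro:
  assumes sub: "U \<subseteq> Om X" and nb: "\<And>x. x \<in> U \<Longrightarrow> \<exists>n. \<forall>y\<in>Om X. pre n y = pre n x \<longrightarrow> y \<in> U"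
  shows "openin (cantor_top X) U"
  unfolding cantor_top_def openin_product_topology_alt
proof
  fix x assume "x \<in> U"
  then obtain n where n: "\<forall>y\<in>Om X. pre n y = pre n x \<longrightarrow> y \<in> U" using nb by presburger
  have xO: "x \<in> Om X" using sub \<open>x \<in> U\<close> by (rule subsetD)
  define V where "V = (\<lambda>i. if i < n then {x i} else X)"
  show "\<exists>U'. finite {i \<in> UNIV. U' i \<noteq> topspace (discrete_topology X)} \<and>
           (\<forall>i\<in>UNIV. openin (discrete_topology X) (U' i)) \<and> x \<in> Pi\<^sub>E UNIV U' \<and> Pi\<^sub>E UNIV U' \<subseteq> U"
  proof (intro exI conjI)
    show "finite {i \<in> UNIV. V i \<noteq> topspace (discrete_topology X)}"
      by (rule finite_subset[of _ "{..<n}"]) (auto simp: V_def)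
    show "\<forall>i\<in>UNIV. openin (discrete_topology X) (V i)"
      using xO by (auto simp: V_def Om_eq)
    show "x \<in> Pi\<^sub>E UNIV V" using xO by (simp add: V_def PiE_iff Om_eq)
    show "Pi\<^sub>E UNIV V \<subseteq> U"
    proof
      fix y assume y: "y \<in> Pi\<^sub>E UNIV V"
      have yi: "y i \<in> V i" for i using y by (simp add: PiE_iff)
      have "y i \<in> X" for i
      proof (cases "i < n")
        case True
        then have "y i = x i" using yi[of i] by (simp add: V_def)
        then show ?thesis using xO by (simp add: Om_eq)
      next
        case False
        then show ?thesis using yi[of i] by (simp add: V_def)
      qed
      then have "y \<in> Om X" by (simp add: Om_eq)
      moreover have "pre n y = pre n x"
      proof (rule nth_equalityI)
        fix i assume "i < length (pre n y)"
        then have "i < n" by simp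
        then show "pre n y ! i = pre n x ! i" using yi[of i] by (simp add: V_def)
      qed simp
      ultimately show "y \<in> U" using n by blast
    qed
  qed
qed


lemma pre_conc_dep: "pre n s = pre n s' \<Longrightarrow> pre n (conc a s) = pre n (conc a s')"
proof (rule nth_equalityI)
  fix i assume e: "pre n s = pre n s'" and "i < length (pre n (conc a s))"
  then have i: "i < n" by simp
  show "pre n (conc a s) ! i = pre n (conc a s') ! i"
  proof (cases "i < length a")
    case True then show ?thesis using i by (simp add: conc_def)
  next
    case False
    then have "i - length a < n" using i by simp
    then have "pre n s ! (i - length a) = pre n s' ! (i - length a)" using e by simp
    then have "s (i - length a) = s' (i - length a)" using \<open>i - length a < n\<close> by simp
    then show ?thesis using i False by (simp add: conc_def)
  qed
qed simp

definition lp :: "'a set \<Rightarrow> nat \<Rightarrow> ((nat\<Rightarrow>'a)\<Rightarrow>(nat\<Rightarrow>'a)) \<Rightarrow> bool" where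
  "lp X N g \<longleftrightarrow> (\<forall>v\<in>W X N. \<exists>a. set a \<subseteq> X \<and> (\<forall>w\<in>Om X. g (conc v w) = conc a w))"

lemma decomp_pre: "x = conc (pre N x) (sh N x)" by simp

lemma lp_cont:
  assumes lp: "lp X N g" and maps: "\<forall>x\<in>Om X. g x \<in> Om X"
  shows "continuous_map (cantor_top X) (cantor_top X) g"
  unfolding continuous_map_def
proof (intro conjI allI impI)
  show "g \<in> Om X \<rightarrow> Om X" using maps by auto
  fix U assume U: "openin (cantor_top X) U"
  show "openin (cantor_top X) {x \<in> Om X. g x \<in> U}"
  proof (rule open_intro)
    show "{x \<in> Om X. g x \<in> U} \<subseteq> Om X" by auto
    fix x assume x: "x \<in> {x \<in> Om X. g x \<in> U}"
    have xO: "x \<in> Om X" and gxU: "g x \<in> U" using x by auto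
    obtain n where n: "\<forall>y\<in>Om X. pre n y = pre n (g x) \<longrightarrow> y \<in> U" using open_imp[OF U gxU] by blast
    define v where "v = pre N x"
    have v: "v \<in> W X N" using pre_W xO v_def by metis
    obtain a where a: "set a \<subseteq> X" "\<forall>w\<in>Om X. g (conc v w) = conc a w" using lp v unfolding lp_def by meson
    have gx: "g x = conc a (sh N x)" using a(2) sh_Om[OF xO] decomp_pre[of x N] v_def by metis
    show "\<exists>m. \<forall>y\<in>Om X. pre m y = pre m x \<longrightarrow> y \<in> {x \<in> Om X. g x \<in> U}"
    proof (intro exI ballI impI)
      fix y assume y: "y \<in> Om X" "pre (N + n) y = pre (N + n) x"
      have "pre N y = take N (pre (N+n) y)" "pre N x = take N (pre (N+n) x)" by (rule pre_pre, simp)+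
      then have pv: "pre N y = v" using y(2) v_def by simp
      have gy: "g y = conc a (sh N y)" using a(2) sh_Om[OF y(1)] decomp_pre[of y N] pv by metis
      have "pre n (sh N y) = pre n (sh N x)" using y(2) by (simp add: pre_sh)
      then have "pre n (g y) = pre n (g x)" using gx gy pre_conc_dep by metis
      then have "g y \<in> U" using n maps y(1) by blast
      then show "y \<in> {x \<in> Om X. g x \<in> U}" using y(1) by simp
    qed
  qed
qed

definition ext :: "'a set \<Rightarrow> nat \<Rightarrow> nat \<Rightarrow> 'a list set \<Rightarrow> 'a list set" where
  "ext X N k S = {w \<in> W X (N+k). take N w \<in> S}"

lemma L_lift: "L X N S = L X (N+k) (ext X N k S)"
proof -
  have "pre N x = take N (pre (N+k) x)" for x :: "nat \<Rightarrow> 'a" by (rule pre_pre) simp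
  then show ?thesis unfolding L_def ext_def using pre_W by fastforce
qed

lemma ext_sub: "ext X N k S \<subseteq> W X (N+k)" by (auto simp: ext_def)

lemma card_ext:
  assumes fin: "finite X" and S: "S \<subseteq> W X N"
  shows "card (ext X N k S) = card S * card X ^ k"
proof -
  have eq: "ext X N k S = (\<lambda>(v,u). v @ u) ` (S \<times> W X k)"
  proof (rule equalityI; rule subsetI)
    fix w assume w: "w \<in> ext X N k S"
    then have "take N w \<in> S" "drop N w \<in> W X k" using set_drop_subset[of N w]
      by (auto simp: ext_def W_def)
    then show "w \<in> (\<lambda>(v,u). v @ u) ` (S \<times> W X k)"
      by (metis (no_types, lifting) SigmaI append_take_drop_id case_prod_conv image_eqI)
  next
    fix w assume "w \<in> (\<lambda>(v,u). v @ u) ` (S \<times> W X k)"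
    then obtain v u where "w = v @ u" "v \<in> S" "u \<in> W X k" by auto
    then show "w \<in> ext X N k S" using S by (auto simp: ext_def W_def)
  qed
  have inj: "inj_on (\<lambda>(v,u). v @ u) (S \<times> W X k)"
  proof (rule inj_onI)
    fix p q assume p: "p \<in> S \<times> W X k" and q: "q \<in> S \<times> W X k" and e: "(\<lambda>(v,u). v @ u) p = (\<lambda>(v,u). v @ u) q"
    obtain v u where pv: "p = (v,u)" by (cases p)
    obtain v' u' where qv: "q = (v',u')" by (cases q)
    have "length v = length v'" using p q pv qv S by (auto simp: W_def)
    then show "p = q" using e pv qv by simp
  qed
  have "finite S" using S finite_W[OF fin] finite_subset by blast
  then show ?thesis unfolding eq card_image[OF inj] card_cartesian_product card_W[OF fin] by simp
qed

lemma some_Om: "X \<noteq> {} \<Longrightarrow> (\<lambda>_. SOME z. z \<in> X) \<in> Om X"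
  by (simp add: Om_eq some_in_eq)

lemma L_sub: 
  assumes X: "X \<noteq> {}" and S: "S \<subseteq> W X N" and e: "L X N S \<subseteq> L X N S'"
  shows "S \<subseteq> S'"
proof
  fix w assume w: "w \<in> S"
  have wW: "set w \<subseteq> X" "length w = N" using w S by (auto simp: W_def)
  define x where "x = conc w (\<lambda>_. SOME z. z \<in> X)"
  have xO: "x \<in> Om X" using wW(1) some_Om[OF X] by (simp add: x_def conc_Om)
  have px: "pre N x = w" unfolding x_def using wW(2) pre_conc by metis
  have "x \<in> L X N S" using xO px w by (simp add: L_def)
  then have "x \<in> L X N S'" using e by blast
  then show "w \<in> S'" using px by (simp add: L_def)
qed

lemma L_inj:
  assumes X: "X \<noteq> {}" and S: "S \<subseteq> W X N" and S': "S' \<subseteq> W X N" and e: "L X N S = L X N S'"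
  shows "S = S'"
  using L_sub[OF X S] L_sub[OF X S'] e by (metis equalityI order_refl)

lemma clopen_level:
  assumes fin: "finite X" and c: "clopen_in X U"
  shows "\<exists>N. \<exists>S. S \<subseteq> W X N \<and> U = L X N S"
proof -
  have oU: "openin (cantor_top X) U" and cU: "closedin (cantor_top X) U" using c by (auto simp: clopen_in_def)
  have UO: "U \<subseteq> Om X" using oU openin_subset by blast
  have oC: "openin (cantor_top X) (Om X - U)" using cU closedin_def by blast
  have "\<forall>x\<in>Om X. \<exists>n. (\<forall>y\<in>Om X. pre n y = pre n x \<longrightarrow> y \<in> U) \<or> (\<forall>y\<in>Om X. pre n y = pre n x \<longrightarrow> y \<notin> U)"
  proof
    fix x assume x: "x \<in> Om X"
    show "\<exists>n. (\<forall>y\<in>Om X. pre n y = pre n x \<longrightarrow> y \<in> U) \<or> (\<forall>y\<in>Om X. pre n y = pre n x \<longrightarrow> y \<notin> U)"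
    proof (cases "x \<in> U")
      case True then show ?thesis using open_imp[OF oU True] by blast
    next
      case False then have "x \<in> Om X - U" using x by simp
      from open_imp[OF oC this] show ?thesis by blast
    qed
  qed
  then obtain nf where nf: "\<forall>x\<in>Om X. (\<forall>y\<in>Om X. pre (nf x) y = pre (nf x) x \<longrightarrow> y \<in> U) \<or>
      (\<forall>y\<in>Om X. pre (nf x) y = pre (nf x) x \<longrightarrow> y \<notin> U)" by metis
  define C where "C x = {y \<in> Om X. pre (nf x) y = pre (nf x) x}" for x
  have openC: "openin (cantor_top X) (C x)" for x
    by (rule open_intro) (auto simp: C_def intro!: exI[of _ "nf x"])
  have comp: "compact_space (cantor_top X)"
    unfolding cantor_top_def compact_space_product_topology compact_space_discrete_topology using fin by simp
  then have "compactin (cantor_top X) (Om X)" by (simp add: compact_space_def)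
  moreover have "Om X \<subseteq> \<Union> (C ` Om X)" by (auto simp: C_def)
  ultimately obtain F where F: "finite F" "F \<subseteq> C ` Om X" "Om X \<subseteq> \<Union> F"
    unfolding compactin_def using openC by (metis (no_types, lifting) imageE)
  obtain F0 where F0: "F0 \<subseteq> Om X" "finite F0" "F = C ` F0" using finite_subset_image[OF F(1,2)] by blast
  obtain N where N: "nf ` F0 \<subseteq> {..<N}" using finite_nat_bounded F0(2) by blast
  define S where "S = pre N ` U"
  have SW: "S \<subseteq> W X N" using UO pre_W unfolding S_def by blast
  have "U = L X N S"
  proof (rule equalityI; rule subsetI)
    fix x assume "x \<in> U" then show "x \<in> L X N S" using UO by (auto simp: L_def S_def)
  next
    fix x assume x: "x \<in> L X N S"
    then obtain u where u: "u \<in> U" "pre N x = pre N u" "x \<in> Om X" by (auto simp: L_def S_def)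
    have "u \<in> Om X" using u UO by blast
    then obtain x0 where x0: "x0 \<in> F0" "u \<in> C x0" using F F0 by blast
    have le: "nf x0 \<le> N" using N x0 by fastforce
    have "pre (nf x0) x = pre (nf x0) u" using u(2) pre_pre[OF le] by metis
    then have xC: "x \<in> C x0" using x0(2) u(3) by (simp add: C_def)
    have x0O: "x0 \<in> Om X" using x0 F0 by blast
    show "x \<in> U" using nf[rule_format, OF x0O] xC x0(2) u(1) unfolding C_def by blast
  qed
  then show ?thesis using SW by blast
qed


lemma take_W: "v \<in> W X (N+K) \<Longrightarrow> take N v \<in> W X N"
  by (auto simp: W_def dest: in_set_takeD)
lemma drop_W: "v \<in> W X (N+K) \<Longrightarrow> drop N v \<in> W X K"
  by (auto simp: W_def dest: in_set_dropD)

lemma lp_refine: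
  assumes lp: "lp X N g" and v: "v \<in> W X (N+K)"
  shows "\<exists>a. set a \<subseteq> X \<and> K \<le> length a \<and> (\<forall>w\<in>Om X. g (conc v w) = conc a w)"
proof -
  have vt: "take N v \<in> W X N" using v by (rule take_W)
  obtain a0 where a0: "set a0 \<subseteq> X" "\<forall>w\<in>Om X. g (conc (take N v) w) = conc a0 w"
    using lp vt unfolding lp_def by meson
  have dv: "set (drop N v) \<subseteq> X" "length (drop N v) = K" using drop_W[OF v] by (auto simp: W_def)
  show ?thesis
  proof (intro exI conjI ballI)
    show "set (a0 @ drop N v) \<subseteq> X" using a0(1) dv(1) by simp
    show "K \<le> length (a0 @ drop N v)" using dv(2) by simp
    fix w assume w: "w \<in> Om X"
    have cw: "conc (drop N v) w \<in> Om X" using dv(1) w by (simp add: conc_Om)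
    have "g (conc v w) = g (conc (take N v) (conc (drop N v) w))" by (metis append_take_drop_id conc_append)
    also have "\<dots> = conc a0 (conc (drop N v) w)" using a0(2) cw by blast
    also have "\<dots> = conc (a0 @ drop N v) w" by (simp add: conc_append)
    finally show "g (conc v w) = conc (a0 @ drop N v) w" .
  qed
qed

lemma lp_mono: assumes "lp X N g" "N \<le> M" shows "lp X M g"
  unfolding lp_def
proof
  fix v assume "v \<in> W X M"
  then have "v \<in> W X (N + (M - N))" using assms(2) by simp
  from lp_refine[OF assms(1) this] show "\<exists>a. set a \<subseteq> X \<and> (\<forall>w\<in>Om X. g (conc v w) = conc a w)" by blast
qed

lemma lp_comp:
  assumes g: "lp X N g" and h: "lp X M h"
  shows "lp X (N+M) (h \<circ> g)"
  unfolding lp_def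
proof
  fix v assume v: "v \<in> W X (N+M)"
  obtain a where a: "set a \<subseteq> X" "M \<le> length a" "\<forall>w\<in>Om X. g (conc v w) = conc a w"
    using lp_refine[OF g v] by blast
  have ta: "take M a \<in> W X M" using a(1,2) by (auto simp: W_def dest: in_set_takeD)
  obtain b where b: "set b \<subseteq> X" "\<forall>w\<in>Om X. h (conc (take M a) w) = conc b w"
    using h ta unfolding lp_def by meson
  have da: "set (drop M a) \<subseteq> X" using a(1) by (meson in_set_dropD subset_iff)
  show "\<exists>c. set c \<subseteq> X \<and> (\<forall>w\<in>Om X. (h \<circ> g) (conc v w) = conc c w)"
  proof (intro exI conjI ballI)
    show "set (b @ drop M a) \<subseteq> X" using da b(1) by simp
    fix w assume w: "w \<in> Om X"
    have cw: "conc (drop M a) w \<in> Om X" using da w by (simp add: conc_Om)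
    have "(h \<circ> g) (conc v w) = h (conc a w)" using a(3) w by simp
    also have "\<dots> = h (conc (take M a) (conc (drop M a) w))" by (metis append_take_drop_id conc_append)
    also have "\<dots> = conc b (conc (drop M a) w)" using b(2) cw by blast
    also have "\<dots> = conc (b @ drop M a) w" by (simp add: conc_append)
    finally show "(h \<circ> g) (conc v w) = conc (b @ drop M a) w" .
  qed
qed

definition hinv :: "'a set \<Rightarrow> ((nat\<Rightarrow>'a)\<Rightarrow>(nat\<Rightarrow>'a)) \<Rightarrow> (nat\<Rightarrow>'a)\<Rightarrow>(nat\<Rightarrow>'a)" where
  "hinv X g = (\<lambda>x. if x \<in> Om X then inv_into (Om X) g x else x)"

lemma hinv_props:
  assumes b: "bij_betw g (Om X) (Om X)" and out: "\<forall>x. x \<notin> Om X \<longrightarrow> g x = x"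
  shows "hinv X g \<circ> g = id" "g \<circ> hinv X g = id" "bij_betw (hinv X g) (Om X) (Om X)"
    "\<forall>x. x \<notin> Om X \<longrightarrow> hinv X g x = x"
proof -
  have gO: "g x \<in> Om X" if "x \<in> Om X" for x using b that bij_betwE by blast
  show "hinv X g \<circ> g = id"
  proof
    fix x show "(hinv X g \<circ> g) x = id x"
    proof (cases "x \<in> Om X")
      case True then show ?thesis using gO[OF True] bij_betw_inv_into_left[OF b True] by (simp add: hinv_def)
    next
      case False then show ?thesis using out by (simp add: hinv_def)
    qed
  qed
  show "g \<circ> hinv X g = id"
  proof
    fix x show "(g \<circ> hinv X g) x = id x"
    proof (cases "x \<in> Om X")
      case True then show ?thesis using bij_betw_inv_into_right[OF b True] by (simp add: hinv_def)
    next
      case False then show ?thesis using out by (simp add: hinv_def)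
    qed
  qed
  show "bij_betw (hinv X g) (Om X) (Om X)"
    using bij_betw_inv_into[OF b] by (rule bij_betw_cong[THEN iffD1, rotated]) (simp add: hinv_def)
  show "\<forall>x. x \<notin> Om X \<longrightarrow> hinv X g x = x" by (simp add: hinv_def)
qed

lemma lp_inv:
  assumes X: "X \<noteq> {}" and fin: "finite X" and lp: "lp X N g" and b: "bij_betw g (Om X) (Om X)"
  shows "\<exists>M. lp X M (hinv X g)"
proof -
  obtain a where a: "\<forall>v\<in>W X N. set (a v) \<subseteq> X \<and> (\<forall>w\<in>Om X. g (conc v w) = conc (a v) w)"
    using lp unfolding lp_def by metis
  have "finite ((\<lambda>v. length (a v)) ` W X N)" using finite_W[OF fin] by blast
  then obtain M where M: "(\<lambda>v. length (a v)) ` W X N \<subseteq> {..<M}" using finite_nat_bounded by blast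
  define w0 where "w0 = (\<lambda>_::nat. SOME z. z \<in> X)"
  have w0: "w0 \<in> Om X" using some_Om[OF X] w0_def by simp
  have "lp X M (hinv X g)" unfolding lp_def
  proof
    fix u assume u: "u \<in> W X M"
    have cu: "conc u w0 \<in> Om X" using u w0 by (simp add: W_def conc_Om)
    then obtain y where y: "y \<in> Om X" "g y = conc u w0" using b unfolding bij_betw_def by (metis imageE)
    define v where "v = pre N y"
    have vW: "v \<in> W X N" using y(1) pre_W v_def by metis
    have av: "set (a v) \<subseteq> X" "\<forall>w\<in>Om X. g (conc v w) = conc (a v) w" using a vW by auto
    have gy: "g y = conc (a v) (sh N y)" using av(2) sh_Om[OF y(1)] decomp_pre[of y N] v_def by metis
    have la: "length (a v) \<le> M" using M vW by fastforce
    have "pre (length (a v)) (conc u w0) = a v" using gy y(2) by (metis pre_conc)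
    moreover have "pre (length (a v)) (conc u w0) = take (length (a v)) u" using la u by (simp add: W_def pre_conc_le)
    ultimately have au: "u = a v @ drop (length (a v)) u" by (metis append_take_drop_id)
    define r where "r = drop (length (a v)) u"
    have r: "set r \<subseteq> X" using u by (auto simp: W_def r_def dest: in_set_dropD)
    show "\<exists>c. set c \<subseteq> X \<and> (\<forall>w\<in>Om X. hinv X g (conc u w) = conc c w)"
    proof (intro exI conjI ballI)
      show "set (v @ r) \<subseteq> X" using vW r by (simp add: W_def)
      fix w assume w: "w \<in> Om X"
      have crw: "conc r w \<in> Om X" using r w by (simp add: conc_Om)
      have vrw: "conc (v @ r) w \<in> Om X" using vW r w by (simp add: W_def conc_Om)
      have "g (conc (v @ r) w) = g (conc v (conc r w))" by (simp add: conc_append)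
      also have "\<dots> = conc (a v) (conc r w)" using av(2) crw by blast
      also have "\<dots> = conc u w" using au r_def by (metis conc_append)
      finally have e: "g (conc (v @ r) w) = conc u w" .
      have cuO: "conc u w \<in> Om X" using u w by (simp add: W_def conc_Om)
      show "hinv X g (conc u w) = conc (v @ r) w"
        unfolding hinv_def using cuO e vrw bij_betw_inv_into_left[OF b vrw] by simp
    qed
  qed
  then show ?thesis by blast
qed


lemma cyl_conc: "w \<in> Om X \<Longrightarrow> conc v w \<in> cyl X v" by (auto simp: cyl_def)

lemma ca_W: assumes fin: "finite X" shows "complete_antichain X (W X N)"
  unfolding complete_antichain_def
proof (intro conjI)
  show "finite (W X N)" using finite_W[OF fin] .
  show "W X N \<subseteq> lists X" by (auto simp: W_def)
  show "\<forall>u\<in>W X N. \<forall>v\<in>W X N. u \<noteq> v \<longrightarrow> \<not> (\<exists>w. v = u @ w)" by (auto simp: W_def)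
  show "(\<Union>v\<in>W X N. cyl X v) = Om X"
  proof (rule equalityI; rule subsetI)
    fix x assume "x \<in> (\<Union>v\<in>W X N. cyl X v)"
    then obtain v where "v \<in> W X N" "x \<in> cyl X v" by blast
    then show "x \<in> Om X" using cyl_eq[of v X] by (auto simp: W_def)
  next
    fix x assume x: "x \<in> Om X"
    have "x \<in> cyl X (pre N x)" using x cyl_eq[OF pre_Om[OF x]] by simp
    then show "x \<in> (\<Union>v\<in>W X N. cyl X v)" using pre_W[OF x] by blast
  qed
  show "disjoint_family_on (cyl X) (W X N)"
    unfolding disjoint_family_on_def
  proof (intro ballI impI)
    fix m n assume m: "m \<in> W X N" and n: "n \<in> W X N" and mn: "m \<noteq> n"
    show "cyl X m \<inter> cyl X n = {}" using m n mn cyl_eq[of m X] cyl_eq[of n X] by (auto simp: W_def)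
  qed
qed

lemma ca_image:
  assumes X: "X \<noteq> {}" and fin: "finite X" and b: "bij_betw g (Om X) (Om X)"
   and a: "\<forall>v\<in>W X N. set (a v) \<subseteq> X \<and> (\<forall>w\<in>Om X. g (conc v w) = conc (a v) w)"
  shows "complete_antichain X (a ` W X N) \<and> inj_on a (W X N)"
proof -
  define w0 where "w0 = (\<lambda>_::nat. SOME z. z \<in> X)"
  have w0: "w0 \<in> Om X" using some_Om[OF X] w0_def by simp
  have inj: "inj_on g (Om X)" using b by (simp add: bij_betw_def)
  have key: "v = v'" if v: "v \<in> W X N" and v': "v' \<in> W X N" and w: "w \<in> Om X" and w': "w' \<in> Om X"
     and e: "conc (a v) w = conc (a v') w'" for v v' w w'
  proof -
    have "g (conc v w) = g (conc v' w')" using a v v' w w' e by auto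
    moreover have "conc v w \<in> Om X" "conc v' w' \<in> Om X" using v v' w w' by (auto simp: W_def conc_Om)
    ultimately have "conc v w = conc v' w'" using inj by (meson inj_onD)
    then show ?thesis using v v' conc_eq[of v v' w w'] by (auto simp: W_def)
  qed
  have ia: "inj_on a (W X N)"
  proof (rule inj_onI)
    fix x y assume "x \<in> W X N" "y \<in> W X N" "a x = a y"
    then show "x = y" using key[of x y w0 w0] w0 by simp
  qed
  have ca: "complete_antichain X (a ` W X N)"
    unfolding complete_antichain_def
  proof (intro conjI)
    show "finite (a ` W X N)" using finite_W[OF fin] by blast
    show "a ` W X N \<subseteq> lists X" using a by auto
    show "\<forall>u\<in>a ` W X N. \<forall>v\<in>a ` W X N. u \<noteq> v \<longrightarrow> \<not> (\<exists>w. v = u @ w)"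
    proof (intro ballI impI notI)
      fix u v assume u: "u \<in> a ` W X N" and v: "v \<in> a ` W X N" and uv: "u \<noteq> v" and ex: "\<exists>w. v = u @ w"
      obtain p where p: "p \<in> W X N" "u = a p" using u by blast
      obtain q where q: "q \<in> W X N" "v = a q" using v by blast
      obtain t where t: "v = u @ t" using ex by blast
      have "set (a q) \<subseteq> X" using q(1) a by blast
      then have ts: "set t \<subseteq> X" using t q(2) by simp
      have "conc (a q) w0 = conc (a p) (conc t w0)" using t p q by (simp add: conc_append)
      moreover have "conc t w0 \<in> Om X" using ts w0 by (simp add: conc_Om)
      ultimately have "q = p" using key[OF q(1) p(1) w0] by blast
      then show False using uv p q by simp
    qed
    show "(\<Union>v\<in>a ` W X N. cyl X v) = Om X"
    proof (rule equalityI; rule subsetI)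
      fix x assume "x \<in> (\<Union>v\<in>a ` W X N. cyl X v)"
      then obtain v where "v \<in> W X N" "x \<in> cyl X (a v)" by blast
      then show "x \<in> Om X" using a cyl_eq[of "a v" X] by auto
    next
      fix x assume x: "x \<in> Om X"
      then obtain y where y: "y \<in> Om X" "x = g y" using b unfolding bij_betw_def by (metis imageE)
      have vW: "pre N y \<in> W X N" using pre_W[OF y(1)] .
      have "x = conc (a (pre N y)) (sh N y)" using a vW y sh_Om[OF y(1)] decomp_pre[of y N] by metis
      then have "x \<in> cyl X (a (pre N y))" using cyl_conc[OF sh_Om[OF y(1)]] by simp
      then show "x \<in> (\<Union>v\<in>a ` W X N. cyl X v)" using vW by blast
    qed
    show "disjoint_family_on (cyl X) (a ` W X N)"
      unfolding disjoint_family_on_def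
    proof (intro ballI impI)
      fix m n assume m: "m \<in> a ` W X N" and n: "n \<in> a ` W X N" and mn: "m \<noteq> n"
      show "cyl X m \<inter> cyl X n = {}"
      proof (rule ccontr)
        assume "cyl X m \<inter> cyl X n \<noteq> {}"
        then obtain x where "x \<in> cyl X m" "x \<in> cyl X n" by blast
        then obtain w w' where "x = conc m w" "w \<in> Om X" "x = conc n w'" "w' \<in> Om X" unfolding cyl_def by blast
        moreover obtain p where p: "p \<in> W X N" "m = a p" using m by blast
        moreover obtain q where q: "q \<in> W X N" "n = a q" using n by blast
        ultimately have "p = q" using key by metis
        then show False using mn p q by simp
      qed
    qed
  qed
  show ?thesis using ca ia by simp
qed

lemma HT_intro:
  assumes X: "X \<noteq> {}" and fin: "finite X" and b: "bij_betw g (Om X) (Om X)"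
    and out: "\<forall>x. x \<notin> Om X \<longrightarrow> g x = x" and lp: "lp X N g"
  shows "g \<in> HT X"
proof -
  obtain M where M: "lp X M (hinv X g)" using lp_inv[OF X fin lp b] by blast
  note hp = hinv_props[OF b out]
  have gO: "\<forall>x\<in>Om X. g x \<in> Om X" using b bij_betwE by blast
  have hO: "\<forall>x\<in>Om X. hinv X g x \<in> Om X" using hp(3) bij_betwE by blast
  have hm: "homeomorphic_map (cantor_top X) (cantor_top X) g"
    unfolding homeomorphic_map_maps homeomorphic_maps_def
  proof (intro exI conjI)
    show "continuous_map (cantor_top X) (cantor_top X) g" using lp_cont[OF lp gO] .
    show "continuous_map (cantor_top X) (cantor_top X) (hinv X g)" using lp_cont[OF M hO] .
    show "\<forall>x\<in>Om X. hinv X g (g x) = x" using hp(1) by (metis comp_apply id_apply)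
    show "\<forall>y\<in>Om X. g (hinv X g y) = y" using hp(2) by (metis comp_apply id_apply)
  qed
  obtain a where a: "\<forall>v\<in>W X N. set (a v) \<subseteq> X \<and> (\<forall>w\<in>Om X. g (conc v w) = conc (a v) w)"
    using lp unfolding lp_def by metis
  note ci = ca_image[OF X fin b a]
  have "complete_antichain X (W X N) \<and> complete_antichain X (a ` W X N) \<and> bij_betw a (W X N) (a ` W X N) \<and>
     (\<forall>v\<in>W X N. \<forall>w\<in>Om X. g (conc v w) = conc (a v) w)"
    using ca_W[OF fin] ci a by (simp add: bij_betw_def)
  then show ?thesis unfolding HT_def using hm out by blast
qed

lemma HT_elim:
  assumes X: "X \<noteq> {}" and g: "g \<in> HT X"
  shows "bij_betw g (Om X) (Om X) \<and> (\<forall>x. x \<notin> Om X \<longrightarrow> g x = x) \<and> (\<exists>N. lp X N g)"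
proof -
  have hm: "homeomorphic_map (cantor_top X) (cantor_top X) g" and out: "\<forall>x. x \<notin> Om X \<longrightarrow> g x = x"
    using g by (auto simp: HT_def)
  obtain A1 A2 \<alpha> where A: "complete_antichain X A1" "complete_antichain X A2" "bij_betw \<alpha> A1 A2"
      "\<forall>v\<in>A1. \<forall>w\<in>Om X. g (conc v w) = conc (\<alpha> v) w"
    using g unfolding HT_def by blast
  obtain h where h: "homeomorphic_maps (cantor_top X) (cantor_top X) g h" using hm homeomorphic_map_maps by blast
  have b: "bij_betw g (Om X) (Om X)"
  proof (rule bij_betw_byWitness[where f'=h])
    show "\<forall>a\<in>Om X. h (g a) = a" "\<forall>a'\<in>Om X. g (h a') = a'" using h by (auto simp: homeomorphic_maps_def)
    show "g ` Om X \<subseteq> Om X" "h ` Om X \<subseteq> Om X" using h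
      by (auto simp: homeomorphic_maps_def continuous_map_def)
  qed
  have fA1: "finite A1" using A(1) by (simp add: complete_antichain_def)
  then have "finite (length ` A1)" by blast
  then obtain N where N: "length ` A1 \<subseteq> {..<N}" using finite_nat_bounded by blast
  define w0 where "w0 = (\<lambda>_::nat. SOME z. z \<in> X)"
  have w0: "w0 \<in> Om X" using some_Om[OF X] w0_def by simp
  have "lp X N g" unfolding lp_def
  proof
    fix v assume v: "v \<in> W X N"
    have "conc v w0 \<in> Om X" using v w0 by (simp add: W_def conc_Om)
    then have "conc v w0 \<in> (\<Union>a\<in>A1. cyl X a)" using A(1) by (simp add: complete_antichain_def)
    then obtain a w' where aw: "a \<in> A1" "conc v w0 = conc a w'" "w' \<in> Om X" by (auto simp: cyl_def)
    have la: "length a \<le> N" using N aw(1) by fastforce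
    have "a = take (length a) v" using aw(2) la v pre_conc[of a w'] pre_conc_le[of "length a" v w0]
      by (simp add: W_def)
    then have va: "v = a @ drop (length a) v" by (metis append_take_drop_id)
    have dX: "set (drop (length a) v) \<subseteq> X" using v by (auto simp: W_def dest: in_set_dropD)
    have aX: "set (\<alpha> a) \<subseteq> X" using A(2,3) aw(1) by (auto simp: complete_antichain_def bij_betw_def)
    show "\<exists>c. set c \<subseteq> X \<and> (\<forall>w\<in>Om X. g (conc v w) = conc c w)"
    proof (intro exI conjI ballI)
      show "set (\<alpha> a @ drop (length a) v) \<subseteq> X" using aX dX by simp
      fix w assume w: "w \<in> Om X"
      have cw: "conc (drop (length a) v) w \<in> Om X" using dX w by (simp add: conc_Om)
      have "g (conc v w) = g (conc a (conc (drop (length a) v) w))" using va by (metis conc_append)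
      also have "\<dots> = conc (\<alpha> a) (conc (drop (length a) v) w)" using A(4) aw(1) cw by blast
      also have "\<dots> = conc (\<alpha> a @ drop (length a) v) w" by (simp add: conc_append)
      finally show "g (conc v w) = conc (\<alpha> a @ drop (length a) v) w" .
    qed
  qed
  then show ?thesis using b out by blast
qed

lemma HT_char:
  assumes X: "X \<noteq> {}" and fin: "finite X"
  shows "g \<in> HT X \<longleftrightarrow> bij_betw g (Om X) (Om X) \<and> (\<forall>x. x \<notin> Om X \<longrightarrow> g x = x) \<and> (\<exists>N. lp X N g)"
  using HT_elim[OF X] HT_intro[OF X fin] by blast

lemma HT_comp:
  assumes X: "X \<noteq> {}" and fin: "finite X" and g: "g \<in> HT X" and h: "h \<in> HT X"
  shows "h \<circ> g \<in> HT X"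
proof -
  obtain N where g1: "bij_betw g (Om X) (Om X)" "\<forall>x. x \<notin> Om X \<longrightarrow> g x = x" "lp X N g" using HT_elim[OF X g] by blast
  obtain M where h1: "bij_betw h (Om X) (Om X)" "\<forall>x. x \<notin> Om X \<longrightarrow> h x = x" "lp X M h" using HT_elim[OF X h] by blast
  show ?thesis
    using HT_intro[OF X fin bij_betw_trans[OF g1(1) h1(1)] _ lp_comp[OF g1(3) h1(3)]] g1(2) h1(2) by simp
qed

lemma HT_hinv:
  assumes X: "X \<noteq> {}" and fin: "finite X" and g: "g \<in> HT X"
  shows "hinv X g \<in> HT X" "hinv X g \<circ> g = id" "g \<circ> hinv X g = id"
proof -
  obtain N where g1: "bij_betw g (Om X) (Om X)" "\<forall>x. x \<notin> Om X \<longrightarrow> g x = x" "lp X N g" using HT_elim[OF X g] by blast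
  note hp = hinv_props[OF g1(1,2)]
  obtain M where "lp X M (hinv X g)" using lp_inv[OF X fin g1(3,1)] by blast
  then show "hinv X g \<in> HT X" using HT_intro[OF X fin hp(3)] hp(4) by blast
  show "hinv X g \<circ> g = id" "g \<circ> hinv X g = id" using hp by auto
qed

lemma HT_id: assumes X: "X \<noteq> {}" and fin: "finite X" shows "id \<in> HT X"
proof -
  have "lp X 0 id" unfolding lp_def by (auto simp: W_def intro!: exI[of _ "[]"])
  then show ?thesis using HT_intro[OF X fin, of id 0] by simp
qed

lemma group_HT: assumes X: "X \<noteq> {}" and fin: "finite X" shows "group (HT_group X)"
proof (rule groupI)
  show "\<And>x y. x \<in> carrier (HT_group X) \<Longrightarrow> y \<in> carrier (HT_group X) \<Longrightarrow> x \<otimes>\<^bsub>HT_group X\<^esub> y \<in> carrier (HT_group X)"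
    using HT_comp[OF X fin] by (simp add: HT_group_def)
  show "\<one>\<^bsub>HT_group X\<^esub> \<in> carrier (HT_group X)" using HT_id[OF X fin] by (simp add: HT_group_def)
  show "\<And>x y z. x \<in> carrier (HT_group X) \<Longrightarrow> y \<in> carrier (HT_group X) \<Longrightarrow> z \<in> carrier (HT_group X) \<Longrightarrow>
        x \<otimes>\<^bsub>HT_group X\<^esub> y \<otimes>\<^bsub>HT_group X\<^esub> z = x \<otimes>\<^bsub>HT_group X\<^esub> (y \<otimes>\<^bsub>HT_group X\<^esub> z)"
    by (simp add: HT_group_def comp_assoc)
  show "\<And>x. x \<in> carrier (HT_group X) \<Longrightarrow> \<one>\<^bsub>HT_group X\<^esub> \<otimes>\<^bsub>HT_group X\<^esub> x = x"
    by (simp add: HT_group_def)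
  show "\<And>x. x \<in> carrier (HT_group X) \<Longrightarrow> \<exists>y\<in>carrier (HT_group X). y \<otimes>\<^bsub>HT_group X\<^esub> x = \<one>\<^bsub>HT_group X\<^esub>"
    using HT_hinv[OF X fin] by (simp add: HT_group_def) blast
qed

lemma inv_HT: assumes X: "X \<noteq> {}" and fin: "finite X" and g: "g \<in> HT X"
  shows "inv\<^bsub>HT_group X\<^esub> g = hinv X g"
  using group.inv_equality[OF group_HT[OF X fin], of "hinv X g" g] HT_hinv[OF X fin g] g
  by (simp add: HT_group_def)

lemma HT_comm_sub: assumes X: "X \<noteq> {}" and fin: "finite X" shows "HT_comm X \<subseteq> HT X"
proof -
  have "subgroup (HT_comm X) (HT_group X)"
    unfolding HT_comm_def using group.derived_is_subgroup[OF group_HT[OF X fin], of "HT X"]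
    by (simp add: HT_group_def)
  then show ?thesis using subgroup.subset by (fastforce simp: HT_group_def)
qed


lemma L_Union: assumes S: "S \<subseteq> W X N" shows "L X N S = (\<Union>v\<in>S. cyl X v)"
proof (rule equalityI; rule subsetI)
  fix x assume x: "x \<in> L X N S"
  then have "x \<in> cyl X (pre N x)" using cyl_eq[of "pre N x" X] pre_Om[of x X] by (simp add: L_def)
  then show "x \<in> (\<Union>v\<in>S. cyl X v)" using x by (auto simp: L_def)
next
  fix x assume "x \<in> (\<Union>v\<in>S. cyl X v)"
  then obtain v where v: "v \<in> S" "x \<in> cyl X v" by blast
  then have "v \<in> W X N" using S by blast
  then show "x \<in> L X N S" using v cyl_eq[of v X] by (auto simp: L_def W_def)
qed

lemma UN_nth: "(\<Union>i<length ws. F (ws ! i)) = (\<Union>v\<in>set ws. F v)"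
proof (rule equalityI; rule subsetI)
  fix x assume "x \<in> (\<Union>i<length ws. F (ws ! i))"
  then obtain i where i: "i < length ws" "x \<in> F (ws ! i)" by blast
  have "ws ! i \<in> set ws" using i(1) by (simp add: nth_mem)
  then show "x \<in> (\<Union>v\<in>set ws. F v)" using i(2) by blast
next
  fix x assume "x \<in> (\<Union>v\<in>set ws. F v)"
  then obtain v where v: "v \<in> set ws" "x \<in> F v" by blast
  then obtain i where "i < length ws" "ws ! i = v" by (auto simp: in_set_conv_nth)
  then show "x \<in> (\<Union>i<length ws. F (ws ! i))" using v(2) by blast
qed

lemma decomp_of_L:
  assumes fin: "finite X" and S: "S \<subseteq> W X N"
  shows "\<exists>vs. decomp X (L X N S) vs \<and> length vs = card S"
proof -
  have "finite S" using S finite_W[OF fin] finite_subset by blast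
  then obtain vs where vs: "set vs = S" "distinct vs" using finite_distinct_list by blast
  have d: "decomp X (L X N S) vs"
    unfolding decomp_def
  proof (intro conjI allI impI)
    show "set vs \<subseteq> lists X" using vs S by (auto simp: W_def)
    fix i j assume i: "i < length vs" and j: "j < length vs" and ij: "i \<noteq> j"
    have ne: "vs ! i \<noteq> vs ! j" using vs(2) i j ij by (simp add: nth_eq_iff_index_eq)
    have "vs ! i \<in> set vs" "vs ! j \<in> set vs" using i j by (simp_all add: nth_mem)
    then have wi: "vs ! i \<in> W X N" "vs ! j \<in> W X N" using vs(1) S by auto
    then have ci: "cyl X (vs ! i) = {x \<in> Om X. pre N x = vs ! i}" "cyl X (vs ! j) = {x \<in> Om X. pre N x = vs ! j}"
      using cyl_eq[of "vs ! i" X] cyl_eq[of "vs ! j" X] by (auto simp: W_def)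
    show "cyl X (vs ! i) \<inter> cyl X (vs ! j) = {}" unfolding ci using ne by auto
  next
    show "(\<Union>i<length vs. cyl X (vs ! i)) = L X N S"
      unfolding UN_nth vs(1) L_Union[OF S] ..
  qed
  moreover have "length vs = card S" using vs distinct_card by metis
  ultimately show ?thesis by blast
qed

lemma decomp_L:
  assumes d: "decomp X U vs" and N: "\<forall>i<length vs. length (vs!i) \<le> N"
  shows "U = L X N {w \<in> W X N. \<exists>i<length vs. take (length (vs!i)) w = vs!i}"
proof -
  have U: "U = (\<Union>i<length vs. cyl X (vs ! i))" and sv: "set vs \<subseteq> lists X" using d by (auto simp: decomp_def)
  have vX: "set (vs!i) \<subseteq> X" if "i < length vs" for i using sv that nth_mem by fastforce
  have "x \<in> U \<longleftrightarrow> x \<in> L X N {w \<in> W X N. \<exists>i<length vs. take (length (vs!i)) w = vs!i}" for x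
  proof -
    have "x \<in> U \<longleftrightarrow> (\<exists>i<length vs. x \<in> Om X \<and> pre (length (vs!i)) x = vs!i)"
      using U cyl_eq[OF vX] by auto
    also have "\<dots> \<longleftrightarrow> (\<exists>i<length vs. x \<in> Om X \<and> take (length (vs!i)) (pre N x) = vs!i)"
      using N pre_pre by metis
    also have "\<dots> \<longleftrightarrow> x \<in> L X N {w \<in> W X N. \<exists>i<length vs. take (length (vs!i)) w = vs!i}"
      using pre_W[of x X N] by (auto simp: L_def)
    finally show ?thesis .
  qed
  then show ?thesis by blast
qed

lemma decomp_card:
  assumes X: "X \<noteq> {}" and fin: "finite X" and d: "decomp X U vs" and N: "\<forall>i<length vs. length (vs!i) \<le> N"
  shows "card {w \<in> W X N. \<exists>i<length vs. take (length (vs!i)) w = vs!i} = (\<Sum>i<length vs. card X ^ (N - length (vs!i)))"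
proof -
  have sv: "set vs \<subseteq> lists X" and dj: "\<forall>i<length vs. \<forall>j<length vs. i \<noteq> j \<longrightarrow> cyl X (vs ! i) \<inter> cyl X (vs ! j) = {}"
    using d by (auto simp: decomp_def)
  have vX: "set (vs!i) \<subseteq> X" if "i < length vs" for i using sv that nth_mem by fastforce
  define B where "B i = {w \<in> W X N. take (length (vs!i)) w = vs!i}" for i
  have eq: "{w \<in> W X N. \<exists>i<length vs. take (length (vs!i)) w = vs!i} = (\<Union>i\<in>{..<length vs}. B i)"
    by (auto simp: B_def)
  define w0 where "w0 = (\<lambda>_::nat. SOME z. z \<in> X)"
  have w0: "w0 \<in> Om X" using some_Om[OF X] w0_def by simp
  have disj: "B i \<inter> B j = {}" if "i \<in> {..<length vs}" "j \<in> {..<length vs}" "i \<noteq> j" for i j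
  proof (rule ccontr)
    assume "B i \<inter> B j \<noteq> {}"
    then obtain w where w: "w \<in> B i" "w \<in> B j" by blast
    have wW: "set w \<subseteq> X" "length w = N" using w by (auto simp: B_def W_def)
    define x where "x = conc w w0"
    have xO: "x \<in> Om X" using wW w0 by (simp add: x_def conc_Om)
    have px: "pre N x = w" using wW(2) pre_conc x_def by metis
    have "x \<in> cyl X (vs!k)" if "k < length vs" "w \<in> B k" for k
    proof -
      have "pre (length (vs!k)) x = take (length (vs!k)) (pre N x)" using N that(1) pre_pre by metis
      then show ?thesis using cyl_eq[OF vX[OF that(1)]] xO px that(2) by (simp add: B_def)
    qed
    then have "x \<in> cyl X (vs!i) \<inter> cyl X (vs!j)" using that w by auto
    then show False using dj that by auto
  qed
  have cB: "card (B i) = card X ^ (N - length (vs!i))" if "i < length vs" for i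
  proof -
    have "B i = (\<lambda>u. vs!i @ u) ` W X (N - length (vs!i))"
    proof (rule equalityI; rule subsetI)
      fix w assume w: "w \<in> B i"
      then have "w = vs!i @ drop (length (vs!i)) w" by (metis (mono_tags, lifting) B_def append_take_drop_id mem_Collect_eq)
      moreover have "drop (length (vs!i)) w \<in> W X (N - length (vs!i))" using w
        by (auto simp: B_def W_def dest: in_set_dropD)
      ultimately show "w \<in> (\<lambda>u. vs!i @ u) ` W X (N - length (vs!i))" by blast
    next
      fix w assume "w \<in> (\<lambda>u. vs!i @ u) ` W X (N - length (vs!i))"
      then obtain u where "w = vs!i @ u" "u \<in> W X (N - length (vs!i))" by blast
      then show "w \<in> B i" using vX[OF that] N that by (auto simp: B_def W_def)
    qed
    moreover have "inj_on (\<lambda>u. vs!i @ u) (W X (N - length (vs!i)))" by (rule inj_onI) simp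
    ultimately show ?thesis using card_W[OF fin] card_image by metis
  qed
  have fB: "finite (B i)" for i
    by (rule finite_subset[OF _ finite_W[OF fin, of N]]) (auto simp: B_def)
  have "card (\<Union>i\<in>{..<length vs}. B i) = (\<Sum>i<length vs. card (B i))"
  proof (rule card_UN_disjoint)
    show "finite {..<length vs}" by simp
    show "\<forall>i\<in>{..<length vs}. finite (B i)" using fB by blast
    show "\<forall>i\<in>{..<length vs}. \<forall>j\<in>{..<length vs}. i \<noteq> j \<longrightarrow> B i \<inter> B j = {}" using disj by blast
  qed
  then show ?thesis unfolding eq using cB by simp
qed

lemma cong_d1: assumes "(d::nat) \<ge> 1" shows "[d = 1] (mod (d - 1))"
proof -
  have "d = (d - 1) + 1" using assms by simp
  then have "d mod (d - 1) = 1 mod (d - 1)" by (metis mod_add_self1)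
  then show ?thesis by (simp add: cong_def)
qed

lemma cong_pow_sum: assumes "(d::nat) \<ge> 1" shows "[(\<Sum>i<n. d ^ f i) = n] (mod (d - 1))"
proof -
  have "[(\<Sum>i<n. d ^ f i) = (\<Sum>i<n. 1)] (mod (d - 1))"
    by (rule cong_sum) (metis cong_d1[OF assms] cong_pow power_one)
  then show ?thesis by simp
qed

theorem part1:
  assumes fin: "finite X" and c2: "card X \<ge> 2" and d1: "decomp X U vs1" and d2: "decomp X U vs2"
  shows "[length vs1 = length vs2] (mod (card X - 1))"
proof -
  have X: "X \<noteq> {}" using c2 by auto
  have "finite (length ` (set vs1 \<union> set vs2))" by simp
  then obtain N where N: "length ` (set vs1 \<union> set vs2) \<subseteq> {..<N}" using finite_nat_bounded by blast
  have N1: "\<forall>i<length vs1. length (vs1!i) \<le> N"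
  proof (intro allI impI)
    fix i assume "i < length vs1"
    then have "vs1 ! i \<in> set vs1" by (simp add: nth_mem)
    then have "length (vs1 ! i) \<in> {..<N}" using N by blast
    then show "length (vs1!i) \<le> N" by simp
  qed
  have N2: "\<forall>i<length vs2. length (vs2!i) \<le> N"
  proof (intro allI impI)
    fix i assume "i < length vs2"
    then have "vs2 ! i \<in> set vs2" by (simp add: nth_mem)
    then have "length (vs2 ! i) \<in> {..<N}" using N by blast
    then show "length (vs2!i) \<le> N" by simp
  qed
  define S1 where "S1 = {w \<in> W X N. \<exists>i<length vs1. take (length (vs1!i)) w = vs1!i}"
  define S2 where "S2 = {w \<in> W X N. \<exists>i<length vs2. take (length (vs2!i)) w = vs2!i}"
  have "L X N S1 = L X N S2" using decomp_L[OF d1 N1] decomp_L[OF d2 N2] S1_def S2_def by simp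
  moreover have "S1 \<subseteq> W X N" "S2 \<subseteq> W X N" unfolding S1_def S2_def by auto
  ultimately have "S1 = S2" using L_inj[OF X] by blast
  moreover have "[card S1 = length vs1] (mod (card X - 1))"
    using decomp_card[OF X fin d1 N1] cong_pow_sum[of "card X"] c2 S1_def by simp
  moreover have "[card S2 = length vs2] (mod (card X - 1))"
    using decomp_card[OF X fin d2 N2] cong_pow_sum[of "card X"] c2 S2_def by simp
  ultimately show ?thesis using cong_sym cong_trans by metis
qed

lemma mres_decomp:
  assumes fin: "finite X" and c2: "card X \<ge> 2" and d: "decomp X U vs"
  shows "mres X U = length vs mod (card X - 1)"
  unfolding mres_def
proof (rule the_equality)
  show "\<exists>vs'. decomp X U vs' \<and> length vs mod (card X - 1) = length vs' mod (card X - 1)" using d by blast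
next
  fix r assume "\<exists>vs'. decomp X U vs' \<and> r = length vs' mod (card X - 1)"
  then obtain vs' where "decomp X U vs'" "r = length vs' mod (card X - 1)" by blast
  then show "r = length vs mod (card X - 1)" using part1[OF fin c2 d] by (simp add: cong_def)
qed

lemma mres_L:
  assumes fin: "finite X" and c2: "card X \<ge> 2" and S: "S \<subseteq> W X N"
  shows "mres X (L X N S) = card S mod (card X - 1)"
proof -
  obtain vs where "decomp X (L X N S) vs" "length vs = card S" using decomp_of_L[OF fin S] by blast
  then show ?thesis using mres_decomp[OF fin c2] by simp
qed

lemma HT_image_L:
  assumes X: "X \<noteq> {}" and fin: "finite X" and g: "g \<in> HT X" and S: "S \<subseteq> W X M" and lp: "lp X M g"
  shows "\<exists>vs. decomp X (g ` L X M S) vs \<and> length vs = card S"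
proof -
  have b: "bij_betw g (Om X) (Om X)" using HT_elim[OF X g] by blast
  obtain a where a: "\<forall>v\<in>W X M. set (a v) \<subseteq> X \<and> (\<forall>w\<in>Om X. g (conc v w) = conc (a v) w)"
    using lp unfolding lp_def by metis
  note ci = ca_image[OF X fin b a]
  have injA: "inj_on a (W X M)" using ci by blast
  have dfA: "disjoint_family_on (cyl X) (a ` W X M)" using ci unfolding complete_antichain_def by blast
  have "finite S" using S finite_W[OF fin] finite_subset by blast
  then obtain ws where ws: "set ws = S" "distinct ws" using finite_distinct_list by blast
  have img: "g ` cyl X v = cyl X (a v)" if v: "v \<in> W X M" for v
  proof -
    have e: "\<forall>w\<in>Om X. g (conc v w) = conc (a v) w" using a v by blast
    show ?thesis unfolding cyl_def
    proof (rule equalityI; rule subsetI)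
      fix y assume "y \<in> g ` {conc v w |w. w \<in> Om X}"
      then obtain w where "w \<in> Om X" "y = g (conc v w)" by blast
      then show "y \<in> {conc (a v) w |w. w \<in> Om X}" using e by auto
    next
      fix y assume "y \<in> {conc (a v) w |w. w \<in> Om X}"
      then obtain w where w: "w \<in> Om X" "y = conc (a v) w" by blast
      then have "y = g (conc v w)" using e by simp
      then show "y \<in> g ` {conc v w |w. w \<in> Om X}" using w(1) by blast
    qed
  qed
  have wsW: "ws ! i \<in> W X M" if "i < length ws" for i
  proof -
    have "ws ! i \<in> set ws" using that by (simp add: nth_mem)
    then show ?thesis using ws(1) S by blast
  qed
  have d: "decomp X (g ` L X M S) (map a ws)"
    unfolding decomp_def
  proof (intro conjI allI impI)
    show "set (map a ws) \<subseteq> lists X"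
    proof
      fix u assume "u \<in> set (map a ws)"
      then obtain v where "v \<in> set ws" "u = a v" by auto
      then have "v \<in> W X M" using ws(1) S by blast
      then show "u \<in> lists X" using a \<open>u = a v\<close> by auto
    qed
    fix i j assume i: "i < length (map a ws)" and j: "j < length (map a ws)" and ij: "i \<noteq> j"
    have ne: "ws ! i \<noteq> ws ! j" using ws(2) i j ij by (simp add: nth_eq_iff_index_eq)
    have wi: "ws ! i \<in> W X M" "ws ! j \<in> W X M" using i j wsW by auto
    have "a (ws ! i) \<noteq> a (ws ! j)"
    proof
      assume "a (ws ! i) = a (ws ! j)"
      then have "ws ! i = ws ! j" using inj_onD[OF injA _ wi] by blast
      then show False using ne by simp
    qed
    moreover have "a (ws ! i) \<in> a ` W X M" "a (ws ! j) \<in> a ` W X M" using wi by auto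
    ultimately have "cyl X (a (ws ! i)) \<inter> cyl X (a (ws ! j)) = {}"
      using dfA unfolding disjoint_family_on_def by blast
    then show "cyl X (map a ws ! i) \<inter> cyl X (map a ws ! j) = {}" using i j by simp
  next
    have "(\<Union>i<length (map a ws). cyl X (map a ws ! i)) = (\<Union>v\<in>set ws. cyl X (a v))"
      using UN_nth[of "\<lambda>v. cyl X (a v)" ws] by simp
    also have "\<dots> = (\<Union>v\<in>S. g ` cyl X v)"
    proof -
      have "\<forall>v\<in>S. g ` cyl X v = cyl X (a v)" using img S by blast
      then show ?thesis using ws(1) by simp
    qed
    also have "\<dots> = g ` L X M S" unfolding L_Union[OF S] by blast
    finally show "(\<Union>i<length (map a ws). cyl X (map a ws ! i)) = g ` L X M S" .
  qed
  moreover have "length (map a ws) = card S" using ws distinct_card by (metis length_map)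
  ultimately show ?thesis by blast
qed

lemma mres_HT:
  assumes fin: "finite X" and c2: "card X \<ge> 2" and c: "clopen_in X U" and g: "g \<in> HT X"
  shows "mres X (g ` U) = mres X U"
proof -
  have X: "X \<noteq> {}" using c2 by auto
  obtain N0 where lp0: "lp X N0 g" using HT_elim[OF X g] by blast
  obtain N1 S1 where S1: "S1 \<subseteq> W X N1" "U = L X N1 S1" using clopen_level[OF fin c] by blast
  define S where "S = ext X N1 N0 S1"
  have U: "U = L X (N1 + N0) S" using S1(2) L_lift[of X N1 S1 N0] unfolding S_def by simp
  have SW: "S \<subseteq> W X (N1 + N0)" unfolding S_def by (rule ext_sub)
  have lp: "lp X (N1 + N0) g" using lp_mono[OF lp0] by simp
  obtain vs where vs: "decomp X (g ` L X (N1 + N0) S) vs" "length vs = card S"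
    using HT_image_L[OF X fin g SW lp] by blast
  have "mres X (g ` U) = card S mod (card X - 1)" using mres_decomp[OF fin c2 vs(1)] vs(2) U by simp
  also have "\<dots> = mres X U" using mres_L[OF fin c2 SW] U by simp
  finally show ?thesis .
qed


definition P :: "'a set \<Rightarrow> nat \<Rightarrow> ('a list \<Rightarrow> 'a list) \<Rightarrow> (nat\<Rightarrow>'a) \<Rightarrow> (nat\<Rightarrow>'a)" where
  "P X N \<pi> x = (if x \<in> Om X then conc (\<pi> (pre N x)) (sh N x) else x)"

lemma sh_conc': "length v = n \<Longrightarrow> sh n (conc v w) = w" using sh_conc by metis
lemma pre_conc': "length v = n \<Longrightarrow> pre n (conc v w) = v" using pre_conc by metis

lemma P_Om:
  assumes pi: "\<pi> ` W X N \<subseteq> W X N" and x: "x \<in> Om X"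
  shows "P X N \<pi> x \<in> Om X" "pre N (P X N \<pi> x) = \<pi> (pre N x)" "sh N (P X N \<pi> x) = sh N x"
proof -
  have w: "\<pi> (pre N x) \<in> W X N" using pi pre_W[OF x] by blast
  show "P X N \<pi> x \<in> Om X" using w x sh_Om[OF x] by (simp add: P_def W_def conc_Om)
  show "pre N (P X N \<pi> x) = \<pi> (pre N x)" using w x by (simp add: P_def W_def pre_conc')
  show "sh N (P X N \<pi> x) = sh N x" using w x by (simp add: P_def W_def sh_conc')
qed

lemma P_conc:
  assumes pi: "\<pi> ` W X N \<subseteq> W X N" and v: "v \<in> W X N" and w: "w \<in> Om X"
  shows "P X N \<pi> (conc v w) = conc (\<pi> v) w"
proof -
  have "conc v w \<in> Om X" using v w by (simp add: W_def conc_Om)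
  then show ?thesis using v by (simp add: P_def W_def pre_conc' sh_conc')
qed

lemma P_comp:
  assumes pi: "\<pi> ` W X N \<subseteq> W X N" and rho: "\<rho> ` W X N \<subseteq> W X N"
  shows "P X N \<pi> \<circ> P X N \<rho> = P X N (\<pi> \<circ> \<rho>)"
proof
  fix x show "(P X N \<pi> \<circ> P X N \<rho>) x = P X N (\<pi> \<circ> \<rho>) x"
  proof (cases "x \<in> Om X")
    case True
    note r = P_Om[OF rho True]
    have "P X N \<pi> (P X N \<rho> x) = conc (\<pi> (\<rho> (pre N x))) (sh N x)"
      using r by (simp add: P_def)
    then show ?thesis using True by (simp add: P_def)
  next
    case False then show ?thesis by (simp add: P_def)
  qed
qed

lemma P_cong: assumes "\<forall>v\<in>W X N. f v = g v" shows "P X N f = P X N g"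
proof
  fix x show "P X N f x = P X N g x" using assms pre_W[of x X N] by (simp add: P_def)
qed

lemma P_id: "P X N id = id"
  by (auto simp: P_def fun_eq_iff)

lemma P_HT:
  assumes X: "X \<noteq> {}" and fin: "finite X" and b: "bij_betw \<pi> (W X N) (W X N)"
  shows "P X N \<pi> \<in> HT X"
proof -
  have pi: "\<pi> ` W X N \<subseteq> W X N" using b bij_betw_imp_surj_on by blast
  define \<pi>' where "\<pi>' = inv_into (W X N) \<pi>"
  have b': "bij_betw \<pi>' (W X N) (W X N)" using bij_betw_inv_into[OF b] \<pi>'_def by simp
  have pi': "\<pi>' ` W X N \<subseteq> W X N" using b' bij_betw_imp_surj_on by blast
  have c1: "P X N \<pi>' \<circ> P X N \<pi> = id"
  proof -
    have "P X N (\<pi>' \<circ> \<pi>) = P X N id"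
      by (rule P_cong) (use bij_betw_inv_into_left[OF b] \<pi>'_def in auto)
    then show ?thesis using P_comp[OF pi' pi] P_id by metis
  qed
  have c2: "P X N \<pi> \<circ> P X N \<pi>' = id"
  proof -
    have "P X N (\<pi> \<circ> \<pi>') = P X N id"
      by (rule P_cong) (use bij_betw_inv_into_right[OF b] \<pi>'_def in auto)
    then show ?thesis using P_comp[OF pi pi'] P_id by metis
  qed
  have bij: "bij_betw (P X N \<pi>) (Om X) (Om X)"
  proof (rule bij_betw_byWitness[where f'="P X N \<pi>'"])
    show "\<forall>a\<in>Om X. P X N \<pi>' (P X N \<pi> a) = a" using c1 by (metis comp_apply id_apply)
    show "\<forall>a'\<in>Om X. P X N \<pi> (P X N \<pi>' a') = a'" using c2 by (metis comp_apply id_apply)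
    show "P X N \<pi> ` Om X \<subseteq> Om X" using P_Om(1)[OF pi] by blast
    show "P X N \<pi>' ` Om X \<subseteq> Om X" using P_Om(1)[OF pi'] by blast
  qed
  have lp: "lp X N (P X N \<pi>)" unfolding lp_def
  proof
    fix v assume v: "v \<in> W X N"
    have "\<pi> v \<in> W X N" using pi v by blast
    then show "\<exists>a. set a \<subseteq> X \<and> (\<forall>w\<in>Om X. P X N \<pi> (conc v w) = conc a w)"
      using P_conc[OF pi v] by (auto simp: W_def)
  qed
  show ?thesis using HT_intro[OF X fin bij _ lp] by (simp add: P_def)
qed

lemma P_image:
  assumes pi: "\<pi> ` W X N \<subseteq> W X N" and S: "S \<subseteq> W X N"
  shows "P X N \<pi> ` L X N S = L X N (\<pi> ` S)"
proof (rule equalityI; rule subsetI)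
  fix y assume "y \<in> P X N \<pi> ` L X N S"
  then obtain x where x: "x \<in> Om X" "pre N x \<in> S" "y = P X N \<pi> x" by (auto simp: L_def)
  then show "y \<in> L X N (\<pi> ` S)" using P_Om[OF pi x(1)] by (auto simp: L_def)
next
  fix y assume "y \<in> L X N (\<pi> ` S)"
  then obtain s where y: "y \<in> Om X" "s \<in> S" "pre N y = \<pi> s" by (auto simp: L_def)
  have sW: "s \<in> W X N" using S y(2) by blast
  define x where "x = conc s (sh N y)"
  have xO: "x \<in> Om X" using sW sh_Om[OF y(1)] by (simp add: x_def W_def conc_Om)
  have px: "pre N x = s" using sW by (simp add: x_def W_def pre_conc')
  have "P X N \<pi> x = conc (\<pi> s) (sh N y)" using P_conc[OF pi sW sh_Om[OF y(1)]] x_def by simp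
  also have "\<dots> = y" using y(3) by (metis conc_pre_sh)
  finally show "y \<in> P X N \<pi> ` L X N S" using xO px y(2) by (auto simp: L_def)
qed

definition tr :: "'b \<Rightarrow> 'b \<Rightarrow> 'b \<Rightarrow> 'b" where
  "tr u v w = (if w = u then v else if w = v then u else w)"

lemma tr_bij: assumes "u \<in> A" "v \<in> A" shows "bij_betw (tr u v) A A"
  by (rule bij_betw_byWitness[where f'="tr u v"]) (use assms in \<open>auto simp: tr_def\<close>)

lemma tr_sub: assumes "u \<in> A" "v \<in> A" shows "tr u v ` A \<subseteq> A"
  using tr_bij[OF assms] bij_betw_imp_surj_on by blast

lemma tr_tr: "tr u v \<circ> tr u v = id" by (auto simp: tr_def fun_eq_iff)

lemma HT_comm_subgroup: assumes X: "X \<noteq> {}" and fin: "finite X"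
  shows "subgroup (HT_comm X) (HT_group X)"
  unfolding HT_comm_def using group.derived_is_subgroup[OF group_HT[OF X fin], of "HT X"]
  by (simp add: HT_group_def)

lemma comm_in:
  assumes X: "X \<noteq> {}" and fin: "finite X" and h1: "h1 \<in> HT X" and h2: "h2 \<in> HT X"
  shows "h1 \<circ> h2 \<circ> hinv X h1 \<circ> hinv X h2 \<in> HT_comm X"
proof -
  have "h1 \<otimes>\<^bsub>HT_group X\<^esub> h2 \<otimes>\<^bsub>HT_group X\<^esub> (inv\<^bsub>HT_group X\<^esub> h1) \<otimes>\<^bsub>HT_group X\<^esub> (inv\<^bsub>HT_group X\<^esub> h2)
        \<in> derived_set (HT_group X) (HT X)" using h1 h2 by blast
  then have "h1 \<otimes>\<^bsub>HT_group X\<^esub> h2 \<otimes>\<^bsub>HT_group X\<^esub> (inv\<^bsub>HT_group X\<^esub> h1) \<otimes>\<^bsub>HT_group X\<^esub> (inv\<^bsub>HT_group X\<^esub> h2)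
        \<in> HT_comm X" unfolding HT_comm_def derived_def by (rule generate.incl)
  then show ?thesis using inv_HT[OF X fin h1] inv_HT[OF X fin h2] by (simp add: HT_group_def)
qed

lemma HT_comm_comp:
  assumes X: "X \<noteq> {}" and fin: "finite X" and g: "g \<in> HT_comm X" and h: "h \<in> HT_comm X"
  shows "g \<circ> h \<in> HT_comm X"
  using subgroup.m_closed[OF HT_comm_subgroup[OF X fin] g h] by (simp add: HT_group_def)

lemma HT_comm_inv:
  assumes X: "X \<noteq> {}" and fin: "finite X" and g: "g \<in> HT_comm X"
  shows "hinv X g \<in> HT_comm X"
proof -
  have gH: "g \<in> HT X" using HT_comm_sub[OF X fin] g by blast
  show ?thesis using subgroup.m_inv_closed[OF HT_comm_subgroup[OF X fin] g] inv_HT[OF X fin gH] by simp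
qed

lemma HT_comm_id: assumes X: "X \<noteq> {}" and fin: "finite X" shows "id \<in> HT_comm X"
  using subgroup.one_closed[OF HT_comm_subgroup[OF X fin]] by (simp add: HT_group_def)

definition R :: "'a set \<Rightarrow> (nat \<Rightarrow> 'a) set \<Rightarrow> (nat \<Rightarrow> 'a) set \<Rightarrow> bool" where
  "R X U1 U2 \<longleftrightarrow> (\<exists>g\<in>HT_comm X. g ` U1 = U2)"

lemma R_refl: assumes "X \<noteq> {}" "finite X" shows "R X U U"
proof -
  have "id \<in> HT_comm X" using HT_comm_id[OF assms] .
  moreover have "id ` U = U" by simp
  ultimately show ?thesis unfolding R_def by blast
qed

lemma R_trans: assumes X: "X \<noteq> {}" and fin: "finite X" and "R X U1 U2" "R X U2 U3" shows "R X U1 U3"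
proof -
  obtain g h where g: "g \<in> HT_comm X" "g ` U1 = U2" and h: "h \<in> HT_comm X" "h ` U2 = U3"
    using assms(3,4) unfolding R_def by blast
  have "(h \<circ> g) ` U1 = h ` (g ` U1)" by (rule image_comp[symmetric])
  then have "(h \<circ> g) ` U1 = U3" using g(2) h(2) by simp
  then show ?thesis using HT_comm_comp[OF X fin h(1) g(1)] unfolding R_def by blast
qed

lemma R_sym: assumes X: "X \<noteq> {}" and fin: "finite X" and "R X U1 U2" shows "R X U2 U1"
proof -
  obtain g where g: "g \<in> HT_comm X" "g ` U1 = U2" using assms(3) unfolding R_def by blast
  have gH: "g \<in> HT X" using HT_comm_sub[OF X fin] g by blast
  have e: "hinv X g \<circ> g = id" using HT_hinv(2)[OF X fin gH] .
  have "hinv X g ` (g ` U1) = (hinv X g \<circ> g) ` U1" by (rule image_comp)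
  then have "hinv X g ` (g ` U1) = U1" unfolding e by simp
  then have "hinv X g ` U2 = U1" using g(2) by simp
  then show ?thesis using HT_comm_inv[OF X fin g(1)] unfolding R_def by blast
qed

lemma P_tr_inv:
  assumes X: "X \<noteq> {}" and fin: "finite X" and u: "u \<in> W X N" and v: "v \<in> W X N"
  shows "hinv X (P X N (tr u v)) = P X N (tr u v)"
proof -
  have ts: "tr u v ` W X N \<subseteq> W X N" using tr_sub[OF u v] .
  have H: "P X N (tr u v) \<in> HT X" using P_HT[OF X fin tr_bij[OF u v]] .
  have "P X N (tr u v) \<circ> P X N (tr u v) = id" using P_comp[OF ts ts] tr_tr P_id by metis
  moreover have "hinv X (P X N (tr u v)) \<circ> P X N (tr u v) = id" using HT_hinv[OF X fin H] by blast
  ultimately show ?thesis by (metis comp_assoc comp_id)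
qed

lemma comm_P:
  assumes X: "X \<noteq> {}" and fin: "finite X" and W: "u1 \<in> W X N" "v1 \<in> W X N" "u2 \<in> W X N" "v2 \<in> W X N"
  shows "P X N (tr u1 v1 \<circ> tr u2 v2 \<circ> tr u1 v1 \<circ> tr u2 v2) \<in> HT_comm X"
proof -
  have t1: "tr u1 v1 ` W X N \<subseteq> W X N" and t2: "tr u2 v2 ` W X N \<subseteq> W X N" using tr_sub W by metis+
  have H1: "P X N (tr u1 v1) \<in> HT X" using P_HT[OF X fin tr_bij] W by metis
  have H2: "P X N (tr u2 v2) \<in> HT X" using P_HT[OF X fin tr_bij] W by metis
  have c: "P X N (tr u1 v1) \<circ> P X N (tr u2 v2) \<circ> P X N (tr u1 v1) \<circ> P X N (tr u2 v2) \<in> HT_comm X"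
    using comm_in[OF X fin H1 H2] P_tr_inv[OF X fin W(1,2)] P_tr_inv[OF X fin W(3,4)] by simp
  have t12: "(tr u1 v1 \<circ> tr u2 v2) ` W X N \<subseteq> W X N" using t1 t2 by (auto simp: image_subset_iff)
  have t121: "(tr u1 v1 \<circ> tr u2 v2 \<circ> tr u1 v1) ` W X N \<subseteq> W X N" using t1 t12 by (auto simp: image_subset_iff)
  have "P X N (tr u1 v1) \<circ> P X N (tr u2 v2) \<circ> P X N (tr u1 v1) \<circ> P X N (tr u2 v2)
      = P X N (tr u1 v1 \<circ> tr u2 v2 \<circ> tr u1 v1 \<circ> tr u2 v2)"
    using P_comp[OF t1 t2] P_comp[OF t12 t1] P_comp[OF t121 t2] by simp
  then show ?thesis using c by simp
qed


lemma tr_comp_ok: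
  assumes "u1 \<in> W X N" "v1 \<in> W X N" "u2 \<in> W X N" "v2 \<in> W X N"
  shows "(tr u1 v1 \<circ> tr u2 v2 \<circ> tr u1 v1 \<circ> tr u2 v2) ` W X N \<subseteq> W X N"
  using tr_sub[OF assms(1,2)] tr_sub[OF assms(3,4)] by (simp add: image_subset_iff)

lemma R_move:
  assumes X: "X \<noteq> {}" and fin: "finite X" and S: "S \<subseteq> W X N" and u: "u \<in> S" and v: "v \<in> W X N" "v \<notin> S"
    and w: "w \<in> W X N" "w \<noteq> u" "w \<noteq> v"
  shows "R X (L X N S) (L X N (insert v (S - {u})))"
proof -
  have uW: "u \<in> W X N" using S u by blast
  have uv: "u \<noteq> v" using u v by blast
  show ?thesis
  proof (cases "w \<in> S")
    case False
    define \<pi> where "\<pi> = tr u v \<circ> tr u w \<circ> tr u v \<circ> tr u w"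
    have pc: "\<pi> x = (if x = u then v else if x = v then w else if x = w then u else x)" for x
      using uv w by (auto simp: \<pi>_def tr_def)
    have img: "\<pi> ` S = insert v (S - {u})"
    proof (rule equalityI; rule subsetI)
      fix y assume "y \<in> \<pi> ` S"
      then obtain x where x: "x \<in> S" "y = \<pi> x" by blast
      then show "y \<in> insert v (S - {u})" using pc[of x] v(2) False by (auto split: if_splits)
    next
      fix y assume y: "y \<in> insert v (S - {u})"
      show "y \<in> \<pi> ` S"
      proof (cases "y = v")
        case True then have "y = \<pi> u" using pc[of u] by simp
        then show ?thesis using u by blast
      next
        case False
        then have "y \<in> S" "y \<noteq> u" using y by auto
        moreover then have "y \<noteq> w" using \<open>w \<notin> S\<close> by blast
        ultimately have "y = \<pi> y" using pc[of y] v(2) by auto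
        then show ?thesis using \<open>y \<in> S\<close> by blast
      qed
    qed
    have c: "P X N \<pi> \<in> HT_comm X" unfolding \<pi>_def by (rule comm_P[OF X fin uW v(1) uW w(1)])
    have "P X N \<pi> ` L X N S = L X N (\<pi> ` S)"
      by (rule P_image[OF _ S]) (unfold \<pi>_def, rule tr_comp_ok[OF uW v(1) uW w(1)])
    then show ?thesis using c img unfolding R_def by auto
  next
    case True
    define \<pi> where "\<pi> = tr u w \<circ> tr u v \<circ> tr u w \<circ> tr u v"
    have pc: "\<pi> x = (if x = u then w else if x = w then v else if x = v then u else x)" for x
      using uv w by (auto simp: \<pi>_def tr_def)
    have img: "\<pi> ` S = insert v (S - {u})"
    proof (rule equalityI; rule subsetI)
      fix y assume "y \<in> \<pi> ` S"
      then obtain x where x: "x \<in> S" "y = \<pi> x" by blast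
      then show "y \<in> insert v (S - {u})" using pc[of x] v(2) True w by (auto split: if_splits)
    next
      fix y assume y: "y \<in> insert v (S - {u})"
      show "y \<in> \<pi> ` S"
      proof (cases "y = v")
        case True then have "y = \<pi> w" using pc[of w] w by simp
        then show ?thesis using \<open>w \<in> S\<close> by blast
      next
        case False
        then have yS: "y \<in> S" "y \<noteq> u" using y by auto
        show ?thesis
        proof (cases "y = w")
          case True then have "y = \<pi> u" using pc[of u] by simp
          then show ?thesis using u by blast
        next
          case False
          then have "y = \<pi> y" using pc[of y] yS v(2) by auto
          then show ?thesis using yS by blast
        qed
      qed
    qed
    have c: "P X N \<pi> \<in> HT_comm X" unfolding \<pi>_def by (rule comm_P[OF X fin uW w(1) uW v(1)])
    have "P X N \<pi> ` L X N S = L X N (\<pi> ` S)"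
      by (rule P_image[OF _ S]) (unfold \<pi>_def, rule tr_comp_ok[OF uW w(1) uW v(1)])
    then show ?thesis using c img unfolding R_def by auto
  qed
qed

lemma R_card_aux:
  assumes X: "X \<noteq> {}" and fin: "finite X" and W3: "3 \<le> card (W X N)" and S': "S' \<subseteq> W X N"
  shows "\<forall>S. S \<subseteq> W X N \<and> card S = card S' \<and> card (S - S') = k \<longrightarrow> R X (L X N S) (L X N S')"
proof (induction k)
  case 0
  show ?case
  proof (intro allI impI)
    fix S assume a: "S \<subseteq> W X N \<and> card S = card S' \<and> card (S - S') = 0"
    have fS: "finite S" "finite S'" using a S' finite_W[OF fin] finite_subset by blast+
    then have "S - S' = {}" using a by simp
    then have "S \<subseteq> S'" by blast
    then have "S = S'" using card_subset_eq[OF fS(2)] a by simp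
    then show "R X (L X N S) (L X N S')" using R_refl[OF X fin] by simp
  qed
next
  case (Suc k)
  show ?case
  proof (intro allI impI)
    fix S assume a: "S \<subseteq> W X N \<and> card S = card S' \<and> card (S - S') = Suc k"
    have fS: "finite S" "finite S'" using a S' finite_W[OF fin] finite_subset by blast+
    have fW: "finite (W X N)" using finite_W[OF fin] .
    obtain u where u: "u \<in> S" "u \<notin> S'" using a by (metis Diff_iff card_0_eq equals0I fS(1) finite_Diff nat.distinct(1))
    have "\<not> S' \<subseteq> S"
    proof
      assume "S' \<subseteq> S"
      then have "S' = S" using card_subset_eq[OF fS(1)] a by simp
      then show False using u by blast
    qed
    then obtain v where v: "v \<in> S'" "v \<notin> S" by blast
    have vW: "v \<in> W X N" using v S' by blast
    have "card (W X N - {u, v}) \<ge> 1"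
    proof -
      have "card {u, v} \<le> 2" by (simp add: card_insert_le_m1)
      moreover have "{u,v} \<subseteq> W X N" using u vW a by blast
      ultimately have "card (W X N - {u, v}) = card (W X N) - card {u,v}" using card_Diff_subset fW
        by (metis finite_subset)
      then show ?thesis using W3 \<open>card {u, v} \<le> 2\<close> by linarith
    qed
    then have "W X N - {u, v} \<noteq> {}" by (metis card.empty not_one_le_zero)
    then obtain w where w: "w \<in> W X N" "w \<noteq> u" "w \<noteq> v" by blast
    define S1 where "S1 = insert v (S - {u})"
    have r1: "R X (L X N S) (L X N S1)" unfolding S1_def using R_move[OF X fin _ u(1) vW v(2) w] a by blast
    have S1W: "S1 \<subseteq> W X N" using a vW by (auto simp: S1_def)
    have cS1: "card S1 = card S"
    proof -
      have "v \<notin> S - {u}" using v by blast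
      then have "card S1 = Suc (card (S - {u}))" unfolding S1_def using fS(1) by simp
      also have "\<dots> = card S" using card_Suc_Diff1[OF fS(1) u(1)] .
      finally show ?thesis .
    qed
    have "S1 - S' = (S - S') - {u}" using v(1) by (auto simp: S1_def)
    then have "card (S1 - S') = k" using a u by simp
    then have "R X (L X N S1) (L X N S')" using Suc.IH S1W cS1 a by simp
    then show "R X (L X N S) (L X N S')" using R_trans[OF X fin r1] by blast
  qed
qed

lemma R_card:
  assumes X: "X \<noteq> {}" and fin: "finite X" and W3: "3 \<le> card (W X N)" and S: "S \<subseteq> W X N" and S': "S' \<subseteq> W X N"
    and c: "card S = card S'"
  shows "R X (L X N S) (L X N S')"
  using R_card_aux[OF X fin W3 S'] S c by blast


definition E :: "'a set \<Rightarrow> 'a list \<Rightarrow> ((nat\<Rightarrow>'a)\<Rightarrow>(nat\<Rightarrow>'a)) \<Rightarrow> (nat\<Rightarrow>'a)\<Rightarrow>(nat\<Rightarrow>'a)" where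
  "E X p g x = (if x \<in> Om X \<and> pre (length p) x = p then conc p (g (sh (length p) x)) else x)"

lemma E_conc: assumes "set p \<subseteq> X" "s \<in> Om X" shows "E X p g (conc p s) = conc p (g s)"
  using assms by (simp add: E_def conc_Om)

lemma E_fix: "x \<notin> Om X \<or> pre (length p) x \<noteq> p \<Longrightarrow> E X p g x = x"
  by (auto simp: E_def)

lemma E_HT:
  assumes X: "X \<noteq> {}" and fin: "finite X" and p: "set p \<subseteq> X" and g: "g \<in> HT X"
  shows "E X p g \<in> HT X"
proof -
  obtain N where g1: "bij_betw g (Om X) (Om X)" "\<forall>x. x \<notin> Om X \<longrightarrow> g x = x" "lp X N g"
    using HT_elim[OF X g] by blast
  define h where "h = hinv X g"
  have h1: "h \<circ> g = id" "g \<circ> h = id" "bij_betw h (Om X) (Om X)" using hinv_props[OF g1(1,2)] h_def by auto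
  have gO: "g s \<in> Om X" if "s \<in> Om X" for s using g1(1) that bij_betwE by blast
  have hO: "h s \<in> Om X" if "s \<in> Om X" for s using h1(3) that bij_betwE by blast
  have EO: "E X p f x \<in> Om X" if "x \<in> Om X" "\<And>s. s \<in> Om X \<Longrightarrow> f s \<in> Om X" for x f
    using that p sh_Om[OF that(1)] by (auto simp: E_def conc_Om)
  have inv: "E X p f2 (E X p f1 x) = x" if "x \<in> Om X" "f2 \<circ> f1 = id" "\<And>s. s \<in> Om X \<Longrightarrow> f1 s \<in> Om X" for x f1 f2
  proof (cases "pre (length p) x = p")
    case True
    have s: "sh (length p) x \<in> Om X" using sh_Om[OF that(1)] .
    have "E X p f1 x = conc p (f1 (sh (length p) x))" using True that(1) by (simp add: E_def)
    then have "E X p f2 (E X p f1 x) = conc p (f2 (f1 (sh (length p) x)))"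
      using E_conc[OF p that(3)[OF s]] by simp
    also have "\<dots> = x" using that(2) True by (metis comp_apply conc_pre_sh id_apply)
    finally show ?thesis .
  next
    case False
    then show ?thesis by (simp add: E_fix)
  qed
  have bij: "bij_betw (E X p g) (Om X) (Om X)"
  proof (rule bij_betw_byWitness[where f'="E X p h"])
    show "\<forall>a\<in>Om X. E X p h (E X p g a) = a" using inv h1(1) gO by blast
    show "\<forall>a'\<in>Om X. E X p g (E X p h a') = a'" using inv h1(2) hO by blast
    show "E X p g ` Om X \<subseteq> Om X" using EO gO by blast
    show "E X p h ` Om X \<subseteq> Om X" using EO hO by blast
  qed
  have lp: "lp X (length p + N) (E X p g)" unfolding lp_def
  proof
    fix v assume v: "v \<in> W X (length p + N)"
    show "\<exists>c. set c \<subseteq> X \<and> (\<forall>w\<in>Om X. E X p g (conc v w) = conc c w)"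
    proof (cases "take (length p) v = p")
      case True
      have v': "drop (length p) v \<in> W X N" using drop_W[OF v] .
      obtain a where a: "set a \<subseteq> X" "\<forall>w\<in>Om X. g (conc (drop (length p) v) w) = conc a w"
        using g1(3) v' unfolding lp_def by meson
      have vv: "v = p @ drop (length p) v" using True by (metis append_take_drop_id)
      show ?thesis
      proof (intro exI conjI ballI)
        show "set (p @ a) \<subseteq> X" using p a(1) by simp
        fix w assume w: "w \<in> Om X"
        have cw: "conc (drop (length p) v) w \<in> Om X" using v' w by (simp add: W_def conc_Om)
        have "E X p g (conc v w) = E X p g (conc p (conc (drop (length p) v) w))" using vv by (metis conc_append)
        also have "\<dots> = conc p (g (conc (drop (length p) v) w))" using E_conc[OF p cw] .
        also have "\<dots> = conc (p @ a) w" using a(2) w by (simp add: conc_append)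
        finally show "E X p g (conc v w) = conc (p @ a) w" .
      qed
    next
      case False
      show ?thesis
      proof (intro exI conjI ballI)
        show "set v \<subseteq> X" using v by (simp add: W_def)
        fix w assume w: "w \<in> Om X"
        have "pre (length p) (conc v w) = take (length p) v" using v by (simp add: W_def pre_conc_le)
        then show "E X p g (conc v w) = conc v w" using False by (simp add: E_fix)
      qed
    qed
  qed
  show ?thesis using HT_intro[OF X fin bij _ lp] by (simp add: E_def)
qed

lemma conc_Cons: "conc (x # v) t = (\<lambda>i. if i = 0 then x else conc v t (i - 1))"
  by (auto simp: conc_def fun_eq_iff nth_Cons')

lemma suc_suc_aux: "\<not> x \<le> Suc 0 \<Longrightarrow> Suc (Suc (x - Suc (Suc 0))) = x" by simp

definition gam :: "'a \<Rightarrow> 'a \<Rightarrow> (nat\<Rightarrow>'a) \<Rightarrow> (nat\<Rightarrow>'a)" where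
  "gam a b s = (if s 0 = a then (if s 1 = a then conc [a] (sh 2 s) else conc [b] (sh 1 s))
                else if s 0 = b then conc [b,a] (sh 1 s) else s)"
definition del :: "'a \<Rightarrow> 'a \<Rightarrow> (nat\<Rightarrow>'a) \<Rightarrow> (nat\<Rightarrow>'a)" where
  "del a b s = (if s 0 = a then conc [a,a] (sh 1 s)
                else if s 0 = b then (if s 1 = a then conc [b] (sh 2 s) else conc [a] (sh 1 s)) else s)"

lemma gam_del: assumes "a \<noteq> b" shows "gam a b (del a b s) = s"
  using assms
  by (cases "s 0 = a"; cases "s 0 = b"; cases "s 1 = a")
     (auto simp: gam_def del_def conc_Cons sh_def fun_eq_iff le_Suc_eq suc_suc_aux)

lemma del_gam: assumes "a \<noteq> b" shows "del a b (gam a b s) = s"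
  using assms
  by (cases "s 0 = a"; cases "s 0 = b"; cases "s 1 = a")
     (auto simp: gam_def del_def conc_Cons sh_def fun_eq_iff le_Suc_eq suc_suc_aux)


definition G :: "'a set \<Rightarrow> 'a \<Rightarrow> 'a \<Rightarrow> (nat\<Rightarrow>'a) \<Rightarrow> (nat\<Rightarrow>'a)" where
  "G X a b x = (if x \<in> Om X then gam a b x else x)"

lemma gam_Om: assumes "a \<in> X" "b \<in> X" "s \<in> Om X" shows "gam a b s \<in> Om X"
  using assms sh_Om[OF assms(3)] by (simp add: gam_def conc_Om)

lemma del_Om: assumes "a \<in> X" "b \<in> X" "s \<in> Om X" shows "del a b s \<in> Om X"
  using assms sh_Om[OF assms(3)] by (simp add: del_def conc_Om)

lemma gam_conc2: assumes "a \<noteq> b"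
  shows "gam a b (conc [x,y] w) = conc (if x = a then (if y = a then [a] else [b,y]) else if x = b then [b,a,y] else [x,y]) w"
  using assms
  by (cases "x = a"; cases "y = a"; cases "x = b")
     (auto simp: gam_def conc_Cons sh_def fun_eq_iff le_Suc_eq suc_suc_aux)

lemma len2: assumes "length v = 2" obtains x y where "v = [x,y]"
proof -
  obtain x t where "v = x # t" using assms by (cases v) auto
  moreover obtain y where "t = [y]" using assms calculation by (cases t) auto
  ultimately show ?thesis using that by blast
qed

lemma G_HT:
  assumes X: "X \<noteq> {}" and fin: "finite X" and a: "a \<in> X" and b: "b \<in> X" and ab: "a \<noteq> b"
  shows "G X a b \<in> HT X"
proof -
  define D where "D x = (if x \<in> Om X then del a b x else x)" for x
  have bij: "bij_betw (G X a b) (Om X) (Om X)"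
  proof (rule bij_betw_byWitness[where f'=D])
    show "\<forall>x\<in>Om X. D (G X a b x) = x" using gam_Om[OF a b] del_gam[OF ab] by (simp add: G_def D_def)
    show "\<forall>x\<in>Om X. G X a b (D x) = x" using del_Om[OF a b] gam_del[OF ab] by (simp add: G_def D_def)
    show "G X a b ` Om X \<subseteq> Om X" using gam_Om[OF a b] by (auto simp: G_def)
    show "D ` Om X \<subseteq> Om X" using del_Om[OF a b] by (auto simp: D_def)
  qed
  have lp: "lp X 2 (G X a b)" unfolding lp_def
  proof
    fix v assume v: "v \<in> W X 2"
    then have "length v = 2" "set v \<subseteq> X" by (auto simp: W_def)
    then obtain x y where xy: "v = [x,y]" "x \<in> X" "y \<in> X" using len2 by (metis insert_subset list.set(2))
    define c where "c = (if x = a then (if y = a then [a] else [b,y]) else if x = b then [b,a,y] else [x,y])"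
    show "\<exists>c. set c \<subseteq> X \<and> (\<forall>w\<in>Om X. G X a b (conc v w) = conc c w)"
    proof (intro exI conjI ballI)
      show "set c \<subseteq> X" using xy a b by (simp add: c_def)
      fix w assume w: "w \<in> Om X"
      have "conc v w \<in> Om X" using v w by (simp add: W_def conc_Om)
      then show "G X a b (conc v w) = conc c w" using gam_conc2[OF ab] xy(1) by (simp add: G_def c_def)
    qed
  qed
  show ?thesis using HT_intro[OF X fin bij _ lp] by (simp add: G_def)
qed

lemma G_aa: assumes ab: "a \<noteq> b" and a: "a \<in> X" and w: "w \<in> Om X" shows "G X a b (conc [a,a] w) = conc [a] w"
proof -
  have "conc [a,a] w \<in> Om X" using a w by (simp add: conc_Om)
  then show ?thesis using gam_conc2[OF ab, of a a w] by (simp add: G_def)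
qed

lemma E_G_image:
  assumes p: "set p \<subseteq> X" and a: "a \<in> X" and ab: "a \<noteq> b"
  shows "E X p (G X a b) ` cyl X (p @ [a,a]) = cyl X (p @ [a])"
proof -
  have e: "E X p (G X a b) (conc (p @ [a,a]) w) = conc (p @ [a]) w" if w: "w \<in> Om X" for w
  proof -
    have c: "conc [a,a] w \<in> Om X" using a w by (simp add: conc_Om)
    have "E X p (G X a b) (conc (p @ [a,a]) w) = E X p (G X a b) (conc p (conc [a,a] w))" by (simp add: conc_append)
    also have "\<dots> = conc p (G X a b (conc [a,a] w))" using E_conc[OF p c] .
    also have "\<dots> = conc (p @ [a]) w" using G_aa[OF ab a w] by (simp add: conc_append)
    finally show ?thesis .
  qed
  show ?thesis unfolding cyl_def
  proof (rule equalityI; rule subsetI)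
    fix y assume "y \<in> E X p (G X a b) ` {conc (p @ [a, a]) w |w. w \<in> Om X}"
    then obtain w where "w \<in> Om X" "y = E X p (G X a b) (conc (p @ [a, a]) w)" by blast
    then show "y \<in> {conc (p @ [a]) w |w. w \<in> Om X}" using e by auto
  next
    fix y assume "y \<in> {conc (p @ [a]) w |w. w \<in> Om X}"
    then obtain w where w: "w \<in> Om X" "y = conc (p @ [a]) w" by blast
    then have "y = E X p (G X a b) (conc (p @ [a, a]) w)" using e by simp
    then show "y \<in> E X p (G X a b) ` {conc (p @ [a, a]) w |w. w \<in> Om X}" using w(1) by blast
  qed
qed

lemma conc_head: "conc [s 0] (sh 1 s) = s"
  by (auto simp: conc_Cons sh_def fun_eq_iff)

lemma cyl_split: assumes v: "set v \<subseteq> X" shows "cyl X v = (\<Union>z\<in>X. cyl X (v @ [z]))"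
proof (rule equalityI; rule subsetI)
  fix x assume "x \<in> cyl X v"
  then obtain w where w: "w \<in> Om X" "x = conc v w" by (auto simp: cyl_def)
  have "x = conc (v @ [w 0]) (sh 1 w)" using w(2) conc_head[of w] by (simp add: conc_append)
  moreover have "w 0 \<in> X" using w(1) by (simp add: Om_eq)
  moreover have "sh 1 w \<in> Om X" using sh_Om[OF w(1)] .
  ultimately show "x \<in> (\<Union>z\<in>X. cyl X (v @ [z]))" by (auto simp: cyl_def)
next
  fix x assume "x \<in> (\<Union>z\<in>X. cyl X (v @ [z]))"
  then obtain z w where zw: "z \<in> X" "w \<in> Om X" "x = conc (v @ [z]) w" by (auto simp: cyl_def)
  then have "x = conc v (conc [z] w)" by (simp add: conc_append)
  moreover have "conc [z] w \<in> Om X" using zw by (simp add: conc_Om)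
  ultimately show "x \<in> cyl X v" by (auto simp: cyl_def)
qed

lemma L_img:
  assumes p: "set p \<subseteq> X" "length p = n" and a: "a \<in> X"
  shows "L X (n+2) ((\<lambda>z. p @ [a,z]) ` X) = cyl X (p @ [a])"
proof -
  have sub: "(\<lambda>z. p @ [a,z]) ` X \<subseteq> W X (n+2)" using p a by (auto simp: W_def)
  have "L X (n+2) ((\<lambda>z. p @ [a,z]) ` X) = (\<Union>z\<in>X. cyl X (p @ [a,z]))"
    unfolding L_Union[OF sub] by blast
  also have "\<dots> = cyl X (p @ [a])" using cyl_split[of "p @ [a]" X] p a by simp
  finally show ?thesis .
qed


lemma R_countmove:
  assumes X: "X \<noteq> {}" and fin: "finite X" and p: "p \<in> W X n" and q: "q \<in> W X n" and pq: "p \<noteq> q"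
    and a: "a \<in> X" and b: "b \<in> X" and ab: "a \<noteq> b"
    and T0: "T0 \<subseteq> W X (n+2)" and T0pq: "\<forall>v\<in>T0. take n v \<noteq> p \<and> take n v \<noteq> q"
  shows "R X (L X (n+2) (insert (p@[a,a]) T0)) (L X (n+2) (T0 \<union> (\<lambda>z. p@[a,z]) ` X))"
proof -
  have pX: "set p \<subseteq> X" "length p = n" using p by (auto simp: W_def)
  define Eg where "Eg = E X p (G X a b)"
  define \<sigma> where "\<sigma> = P X n (tr p q)"
  have EH: "Eg \<in> HT X" using E_HT[OF X fin pX(1) G_HT[OF X fin a b ab]] Eg_def by simp
  have \<sigma>H: "\<sigma> \<in> HT X" using P_HT[OF X fin tr_bij[OF p q]] \<sigma>_def by simp
  have \<sigma>inv: "hinv X \<sigma> = \<sigma>" using P_tr_inv[OF X fin p q] \<sigma>_def by simp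
  have cH: "Eg \<circ> \<sigma> \<circ> hinv X Eg \<circ> \<sigma> \<in> HT_comm X" using comm_in[OF X fin EH \<sigma>H] \<sigma>inv by simp
  have hE: "hinv X Eg \<circ> Eg = id" using HT_hinv(2)[OF X fin EH] .
  have hEfix: "hinv X Eg y = y" if "y \<notin> Om X \<or> pre n y \<noteq> p" for y
  proof (cases "y \<in> Om X")
    case True
    then have "pre (length p) y \<noteq> p" using that pX(2) by simp
    then have "Eg y = y" unfolding Eg_def by (rule E_fix[OF disjI2])
    then have "hinv X Eg (Eg y) = y" using hE by (metis comp_apply id_apply)
    then show ?thesis using \<open>Eg y = y\<close> by simp
  next
    case False then show ?thesis by (simp add: hinv_def)
  qed
  have ts: "tr p q ` W X n \<subseteq> W X n" using tr_sub[OF p q] .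
  have ceq: "(Eg \<circ> \<sigma> \<circ> hinv X Eg \<circ> \<sigma>) x = Eg x" if x: "x \<notin> Om X \<or> pre n x \<noteq> q" for x
  proof (cases "x \<in> Om X")
    case False
    then have "\<sigma> x = x" by (simp add: \<sigma>_def P_def)
    then show ?thesis using hEfix False by simp
  next
    case True
    then have xq: "pre n x \<noteq> q" using x by blast
    show ?thesis
    proof (cases "pre n x = p")
      case True2: True
      define y where "y = \<sigma> x"
      note Po = P_Om[OF ts True]
      have yO: "y \<in> Om X" using Po(1) by (simp add: y_def \<sigma>_def)
      have py: "pre n y = q" using Po(2) True2 by (simp add: y_def \<sigma>_def tr_def)
      have sy: "sh n y = sh n x" using Po(3) by (simp add: y_def \<sigma>_def)
      have hy: "hinv X Eg y = y" using hEfix py pq by simp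
      have "\<sigma> y = conc (tr p q (pre n y)) (sh n y)" using yO by (simp add: \<sigma>_def P_def)
      also have "\<dots> = conc (pre n x) (sh n x)" using sy True2 py by (simp add: tr_def)
      also have "\<dots> = x" by simp
      finally have "\<sigma> y = x" .
      then show ?thesis using hy y_def by simp
    next
      case False
      have "\<sigma> x = x" using True False xq by (simp add: \<sigma>_def P_def tr_def)
      then show ?thesis using hEfix False by simp
    qed
  qed
  define U where "U = L X (n+2) (insert (p@[a,a]) T0)"
  have sub: "insert (p@[a,a]) T0 \<subseteq> W X (n+2)" using T0 pX a by (auto simp: W_def)
  have Uq: "x \<notin> Om X \<or> pre n x \<noteq> q" if "x \<in> U" for x
  proof -
    have xO: "pre (n+2) x \<in> insert (p@[a,a]) T0" using that by (auto simp: U_def L_def)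
    have "pre n x = take n (pre (n+2) x)" by (rule pre_pre) simp
    moreover have "take n (p@[a,a]) = p" using pX(2) by simp
    ultimately show ?thesis using xO T0pq pq by auto
  qed
  have img1: "(Eg \<circ> \<sigma> \<circ> hinv X Eg \<circ> \<sigma>) ` U = Eg ` U"
  proof (rule image_cong)
    fix x assume "x \<in> U"
    then show "(Eg \<circ> \<sigma> \<circ> hinv X Eg \<circ> \<sigma>) x = Eg x" using ceq Uq by blast
  qed simp
  have fixT0: "Eg ` cyl X v = cyl X v" if v: "v \<in> T0" for v
  proof -
    have vW: "v \<in> W X (n+2)" using v T0 by blast
    have fx: "Eg x = x" if "x \<in> cyl X v" for x
    proof -
      have "x \<in> Om X" "pre (n+2) x = v" using that cyl_eq[of v X] vW by (auto simp: W_def)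
      moreover have "pre n x = take n (pre (n+2) x)" by (rule pre_pre) simp
      ultimately have "pre n x = take n v" by simp
      then have "pre (length p) x \<noteq> p" using T0pq v pX(2) by simp
      then show ?thesis unfolding Eg_def by (rule E_fix[OF disjI2])
    qed
    have "Eg ` cyl X v = id ` cyl X v" by (rule image_cong) (simp_all add: fx)
    then show ?thesis by simp
  qed
  have "U = cyl X (p@[a,a]) \<union> (\<Union>v\<in>T0. cyl X v)" unfolding U_def L_Union[OF sub] by simp
  then have "Eg ` U = Eg ` cyl X (p@[a,a]) \<union> (\<Union>v\<in>T0. Eg ` cyl X v)" by (simp add: image_Un image_UN)
  also have "\<dots> = cyl X (p@[a]) \<union> (\<Union>v\<in>T0. cyl X v)"
    using E_G_image[OF pX(1) a ab] fixT0 Eg_def by simp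
  also have "\<dots> = L X (n+2) (T0 \<union> (\<lambda>z. p@[a,z]) ` X)"
  proof -
    have "L X (n+2) (T0 \<union> (\<lambda>z. p@[a,z]) ` X) = L X (n+2) T0 \<union> L X (n+2) ((\<lambda>z. p@[a,z]) ` X)"
      by (auto simp: L_def)
    then show ?thesis using L_Union[OF T0] L_img[OF pX a] by auto
  qed
  finally have "(Eg \<circ> \<sigma> \<circ> hinv X Eg \<circ> \<sigma>) ` U = L X (n+2) (T0 \<union> (\<lambda>z. p@[a,z]) ` X)" using img1 by simp
  then show ?thesis using cH unfolding R_def U_def by blast
qed


lemma two_elems: assumes "finite A" "card A \<ge> 2" obtains a b where "a \<in> A" "b \<in> A" "a \<noteq> b"
proof -
  have "A \<noteq> {}" using assms by auto
  then obtain a where a: "a \<in> A" by blast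
  have "card (A - {a}) = card A - 1" using a assms(1) by simp
  then have "card (A - {a}) \<ge> 1" using assms(2) by simp
  then have "A - {a} \<noteq> {}" by (metis card.empty not_one_le_zero)
  then obtain b where "b \<in> A" "b \<noteq> a" by blast
  then show ?thesis using that a by blast
qed

lemma ineqK: "2 * (d::nat)^2 \<le> d^3 + d"
proof -
  have h: "2*d \<le> d*d + 1" by (induct d) auto
  then have "d * (2*d) \<le> d * (d*d + 1)" by (rule mult_le_mono2)
  then show ?thesis by (simp add: power2_eq_square power3_eq_cube algebra_simps)
qed

lemma R_step:
  assumes fin: "finite X" and c2: "card X \<ge> 2" and n: "n \<ge> 1" and S: "S \<subseteq> W X (n+2)"
    and c1: "1 \<le> card S" and cb: "card S + 2 * card X ^ 2 \<le> card X ^ (n+2) + 1"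
  shows "\<exists>S'. S' \<subseteq> W X (n+2) \<and> card S' = card S + (card X - 1) \<and> R X (L X (n+2) S) (L X (n+2) S')"
proof -
  have X: "X \<noteq> {}" using c2 by auto
  obtain a b where ab: "a \<in> X" "b \<in> X" "a \<noteq> b" using two_elems[OF fin c2] by blast
  have "card X ^ 1 \<le> card X ^ n" using n c2 by (intro power_increasing) auto
  then have "card (W X n) \<ge> 2" using card_W[OF fin, of n] c2 by simp
  then obtain p q where pq: "p \<in> W X n" "q \<in> W X n" "p \<noteq> q" using two_elems[OF finite_W[OF fin]] by blast
  define blk where "blk r = ext X n 2 {r}" for r
  have blkW: "blk r \<subseteq> W X (n+2)" for r unfolding blk_def by (rule ext_sub)
  have cblk: "card (blk r) = card X ^ 2" if "r \<in> W X n" for r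
    using card_ext[OF fin, of "{r}" n 2] that by (simp add: blk_def)
  have blk_take: "take n v = r" if "v \<in> blk r" for v r using that by (simp add: blk_def ext_def)
  have dj: "blk p \<inter> blk q = {}" using blk_take pq(3) by blast
  define R0 where "R0 = W X (n+2) - (blk p \<union> blk q)"
  have fW: "finite (W X (n+2))" using finite_W[OF fin] .
  have cR0: "card R0 = card X ^ (n+2) - 2 * card X ^ 2"
  proof -
    have fb: "finite (blk p)" "finite (blk q)" using blkW fW finite_subset by blast+
    have "card (blk p \<union> blk q) = 2 * card X ^ 2" using card_Un_disjoint[OF fb dj] cblk pq by simp
    moreover have "blk p \<union> blk q \<subseteq> W X (n+2)" using blkW by blast
    ultimately show ?thesis unfolding R0_def using card_Diff_subset[OF finite_subset[OF _ fW]] card_W[OF fin]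
      by (metis (no_types, lifting))
  qed
  have "card S - 1 \<le> card R0" using cR0 cb c1 by linarith
  then obtain T0 where T0: "T0 \<subseteq> R0" "card T0 = card S - 1" "finite T0" by (rule obtain_subset_with_card_n)
  have T0W: "T0 \<subseteq> W X (n+2)" using T0(1) R0_def by blast
  have T0pq: "\<forall>v\<in>T0. take n v \<noteq> p \<and> take n v \<noteq> q"
  proof
    fix v assume v: "v \<in> T0"
    then have "v \<in> W X (n+2)" "v \<notin> blk p" "v \<notin> blk q" using T0(1) R0_def by auto
    then show "take n v \<noteq> p \<and> take n v \<noteq> q" by (auto simp: blk_def ext_def)
  qed
  have pX: "set p \<subseteq> X" "length p = n" using pq by (auto simp: W_def)
  define T where "T = insert (p@[a,a]) T0"
  have nin: "p@[a,a] \<notin> T0" using T0pq pX(2) by auto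
  have cT: "card T = card S" using T0 nin c1 by (simp add: T_def)
  have TW: "T \<subseteq> W X (n+2)" using T0W pX ab by (auto simp: T_def W_def)
  have W3: "3 \<le> card (W X (n+2))"
  proof -
    have "card X ^ 2 \<le> card X ^ (n+2)" using c2 by (intro power_increasing) auto
    moreover have "4 \<le> card X ^ 2" using c2 power_mono[of 2 "card X" 2] by simp
    ultimately show ?thesis using card_W[OF fin] by simp
  qed
  have r1: "R X (L X (n+2) S) (L X (n+2) T)" using R_card[OF X fin W3 S TW] cT by simp
  define img where "img = (\<lambda>z. p@[a,z]) ` X"
  have cimg: "card img = card X" unfolding img_def by (rule card_image) (auto simp: inj_on_def)
  have djimg: "T0 \<inter> img = {}" using T0pq pX(2) by (auto simp: img_def)
  have fimg: "finite img" using fin img_def by simp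
  have cT': "card (T0 \<union> img) = card S + (card X - 1)"
    using card_Un_disjoint[OF T0(3) fimg djimg] cimg T0(2) c1 c2 by simp
  have T'W: "T0 \<union> img \<subseteq> W X (n+2)" using T0W pX ab by (auto simp: img_def W_def)
  have r2: "R X (L X (n+2) T) (L X (n+2) (T0 \<union> img))"
    unfolding T_def img_def using R_countmove[OF X fin pq ab T0W T0pq] .
  show ?thesis using R_trans[OF X fin r1 r2] cT' T'W by blast
qed

lemma R_iter:
  assumes fin: "finite X" and c2: "card X \<ge> 2" and n: "n \<ge> 1" and S: "S \<subseteq> W X (n+2)" and c1: "1 \<le> card S"
  shows "card S + t * (card X - 1) + card X ^ 3 \<le> card X ^ (n+2) \<Longrightarrow>
    \<exists>S'. S' \<subseteq> W X (n+2) \<and> card S' = card S + t * (card X - 1) \<and> R X (L X (n+2) S) (L X (n+2) S')"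
proof (induction t)
  case 0
  have X: "X \<noteq> {}" using c2 by auto
  show ?case using S R_refl[OF X fin] by auto
next
  case (Suc t)
  have X: "X \<noteq> {}" using c2 by auto
  have "card S + t * (card X - 1) + card X ^ 3 \<le> card X ^ (n+2)" using Suc.prems by simp
  then obtain S1 where S1: "S1 \<subseteq> W X (n+2)" "card S1 = card S + t * (card X - 1)" "R X (L X (n+2) S) (L X (n+2) S1)"
    using Suc.IH by blast
  have K: "2 * card X ^ 2 \<le> card X ^ 3 + card X" by (rule ineqK)
  have cb: "card S1 + 2 * card X ^ 2 \<le> card X ^ (n+2) + 1" using Suc.prems S1(2) K c2 by simp
  have "1 \<le> card S1" using S1(2) c1 by simp
  then obtain S2 where S2: "S2 \<subseteq> W X (n+2)" "card S2 = card S1 + (card X - 1)" "R X (L X (n+2) S1) (L X (n+2) S2)"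
    using R_step[OF fin c2 n S1(1) _ cb] by blast
  have "card S2 = card S + Suc t * (card X - 1)" using S2(2) S1(2) by simp
  then show ?case using S2(1) R_trans[OF X fin S1(3) S2(3)] by blast
qed

lemma R_main:
  assumes fin: "finite X" and c2: "card X \<ge> 2" and n: "n \<ge> 1" and T1: "T1 \<subseteq> W X (n+2)" and T2: "T2 \<subseteq> W X (n+2)"
    and c1: "1 \<le> card T1" and le: "card T1 \<le> card T2" and bd: "card T2 + card X ^ 3 \<le> card X ^ (n+2)"
    and cg: "[card T1 = card T2] (mod (card X - 1))"
  shows "R X (L X (n+2) T1) (L X (n+2) T2)"
proof -
  have X: "X \<noteq> {}" using c2 by auto
  have "(card X - 1) dvd (card T2 - card T1)" using cg le cong_altdef_nat cong_sym by blast
  then obtain t where t: "card T2 - card T1 = (card X - 1) * t" by blast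
  then have ct: "card T2 = card T1 + t * (card X - 1)" using le by (simp add: mult.commute)
  obtain S' where S': "S' \<subseteq> W X (n+2)" "card S' = card T1 + t * (card X - 1)" "R X (L X (n+2) T1) (L X (n+2) S')"
    using R_iter[OF fin c2 n T1 c1, of t] bd ct by auto
  have W3: "3 \<le> card (W X (n+2))"
  proof -
    have "card X ^ 2 \<le> card X ^ (n+2)" using c2 by (intro power_increasing) auto
    moreover have "4 \<le> card X ^ 2" using c2 power_mono[of 2 "card X" 2] by simp
    ultimately show ?thesis using card_W[OF fin] by simp
  qed
  have "R X (L X (n+2) S') (L X (n+2) T2)" using R_card[OF X fin W3 S'(1) T2] S'(2) ct by simp
  then show ?thesis using R_trans[OF X fin S'(3)] by blast
qed

lemma level_bounds:
  assumes fin: "finite X" and c2: "card X \<ge> 2" and c: "clopen_in X U" and ne: "U \<noteq> {}" and np: "U \<noteq> Om X"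
  shows "\<exists>N S. S \<subseteq> W X N \<and> U = L X N S \<and> 1 \<le> card S \<and> card S < card X ^ N"
proof -
  obtain N S where S: "S \<subseteq> W X N" "U = L X N S" using clopen_level[OF fin c] by blast
  have fW: "finite (W X N)" using finite_W[OF fin] .
  have "S \<noteq> {}" using S ne by (auto simp: L_def)
  then have "1 \<le> card S" using S fW finite_subset by (metis One_nat_def Suc_leI card_gt_0_iff)
  moreover have "S \<noteq> W X N"
  proof
    assume "S = W X N"
    then have "U = Om X" using S pre_W by (auto simp: L_def)
    then show False using np by simp
  qed
  then have "card S < card X ^ N" using psubset_card_mono[OF fW] S card_W[OF fin] by auto
  ultimately show ?thesis using S by blast
qed

lemma lift_bound:
  assumes fin: "finite X" and c2: "card X \<ge> 2" and S: "S \<subseteq> W X N" and c1: "1 \<le> card S" and cl: "card S < card X ^ N"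
  shows "ext X N k S \<subseteq> W X (N+k) \<and> L X N S = L X (N+k) (ext X N k S) \<and> 1 \<le> card (ext X N k S) \<and>
         card (ext X N k S) + card X ^ k \<le> card X ^ (N+k)"
proof -
  have ce: "card (ext X N k S) = card S * card X ^ k" using card_ext[OF fin S] .
  have pk: "1 \<le> card X ^ k" using c2 by simp
  have "(card S + 1) * card X ^ k \<le> card X ^ N * card X ^ k" using cl by (intro mult_le_mono1) simp
  then have "card S * card X ^ k + card X ^ k \<le> card X ^ (N+k)" by (simp add: power_add algebra_simps)
  moreover have "1 \<le> card S * card X ^ k" using c1 pk by simp
  ultimately show ?thesis using ext_sub L_lift ce by metis
qed

lemma orbit_construct:
  assumes fin: "finite X" and c2: "card X \<ge> 2"
    and c1: "clopen_in X U1" and c2': "clopen_in X U2" and ne1: "U1 \<noteq> {}" and ne2: "U2 \<noteq> {}"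
    and np1: "U1 \<noteq> Om X" and np2: "U2 \<noteq> Om X" and m: "mres X U1 = mres X U2"
  shows "R X U1 U2"
proof -
  have X: "X \<noteq> {}" using c2 by auto
  obtain N1 S1 where S1: "S1 \<subseteq> W X N1" "U1 = L X N1 S1" "1 \<le> card S1" "card S1 < card X ^ N1"
    using level_bounds[OF fin c2 c1 ne1 np1] by blast
  obtain N2 S2 where S2: "S2 \<subseteq> W X N2" "U2 = L X N2 S2" "1 \<le> card S2" "card S2 < card X ^ N2"
    using level_bounds[OF fin c2 c2' ne2 np2] by blast
  define n where "n = N1 + N2 + 1"
  define T1 where "T1 = ext X N1 (N2 + 3) S1"
  define T2 where "T2 = ext X N2 (N1 + 3) S2"
  have e1: "N1 + (N2 + 3) = n + 2" and e2: "N2 + (N1 + 3) = n + 2" by (simp_all add: n_def)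
  note l1 = lift_bound[OF fin c2 S1(1,3,4), of "N2 + 3", folded T1_def, unfolded e1]
  note l2 = lift_bound[OF fin c2 S2(1,3,4), of "N1 + 3", folded T2_def, unfolded e2]
  have p3: "card X ^ 3 \<le> card X ^ (N2 + 3)" "card X ^ 3 \<le> card X ^ (N1 + 3)"
    using c2 by (intro power_increasing; simp)+
  have b1: "card T1 + card X ^ 3 \<le> card X ^ (n+2)" using l1 p3(1) by linarith
  have b2: "card T2 + card X ^ 3 \<le> card X ^ (n+2)" using l2 p3(2) by linarith
  have U1: "U1 = L X (n+2) T1" using l1 S1(2) by simp
  have U2: "U2 = L X (n+2) T2" using l2 S2(2) by simp
  have "card T1 mod (card X - 1) = card T2 mod (card X - 1)"
    using m mres_L[OF fin c2 conjunct1[OF l1]] mres_L[OF fin c2 conjunct1[OF l2]] U1 U2 by simp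
  then have cg: "[card T1 = card T2] (mod (card X - 1))" by (simp add: cong_def)
  have n1: "n \<ge> 1" by (simp add: n_def)
  show ?thesis
  proof (cases "card T1 \<le> card T2")
    case True
    show ?thesis using R_main[OF fin c2 n1 conjunct1[OF l1] conjunct1[OF l2] _ True b2 cg] l1 U1 U2 by simp
  next
    case False
    then have "card T2 \<le> card T1" by simp
    then have "R X (L X (n+2) T2) (L X (n+2) T1)"
      using R_main[OF fin c2 n1 conjunct1[OF l2] conjunct1[OF l1] _ _ b1 cong_sym[OF cg]] l2 by simp
    then show ?thesis using R_sym[OF X fin] U1 U2 by simp
  qed
qed

theorem proposition4p5:
  fixes X :: "'a set"
  assumes "finite X" and "card X \<ge> 2"
  shows "(\<forall>U vs1 vs2. clopen_in X U \<and> decomp X U vs1 \<and> decomp X U vs2 \<longrightarrow>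
            [length vs1 = length vs2] (mod (card X - 1)))
       \<and> (\<forall>U1 U2. clopen_in X U1 \<and> clopen_in X U2 \<and>
            U1 \<noteq> {} \<and> U2 \<noteq> {} \<and>
            U1 \<noteq> topspace (cantor_top X) \<and> U2 \<noteq> topspace (cantor_top X) \<longrightarrow>
            (same_orbit (HT X) U1 U2 \<longleftrightarrow> same_orbit (HT_comm X) U1 U2) \<and>
            (same_orbit (HT_comm X) U1 U2 \<longleftrightarrow> mres X U1 = mres X U2))"
proof (intro conjI allI impI)
  fix U vs1 vs2 assume "clopen_in X U \<and> decomp X U vs1 \<and> decomp X U vs2"
  then show "[length vs1 = length vs2] (mod (card X - 1))" using part1[OF assms] by blast
next
  fix U1 U2
  assume a: "clopen_in X U1 \<and> clopen_in X U2 \<and> U1 \<noteq> {} \<and> U2 \<noteq> {} \<and>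
            U1 \<noteq> topspace (cantor_top X) \<and> U2 \<noteq> topspace (cantor_top X)"
  have X: "X \<noteq> {}" using assms(2) by auto
  have A: "mres X U1 = mres X U2" if so: "same_orbit (HT X) U1 U2"
  proof -
    obtain g where g: "g \<in> HT X" "g ` U1 = U2" using so unfolding same_orbit_def by blast
    show ?thesis using mres_HT[OF assms _ g(1), of U1] a g(2) by simp
  qed
  have B: "same_orbit (HT_comm X) U1 U2" if "mres X U1 = mres X U2"
    using orbit_construct[OF assms, of U1 U2] a that unfolding R_def same_orbit_def by blast
  have C: "same_orbit (HT X) U1 U2" if "same_orbit (HT_comm X) U1 U2"
    using that HT_comm_sub[OF X assms(1)] unfolding same_orbit_def by blast
  show "same_orbit (HT X) U1 U2 = same_orbit (HT_comm X) U1 U2" using A B C by blast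
  show "same_orbit (HT_comm X) U1 U2 = (mres X U1 = mres X U2)" using A B C by blast
qed

end
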